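(* The function $g:[0,1]\times\mathbb R\to\mathbb R$, $g(s,x):=\xi(t_0(s,x),x)$, is of class $C^2$. Consequently $h(s,x):=\eta(t_0(s,x),x)=w(g(s,x))+s\varphi(g(s,x))$ is also of class $C^2$.
   Context: Let $w\in C^3(\mathbb R)$ be periodic with $w>0$ on $[-1,1]$. Let $-1<a<b<1$ and let $\varphi:[a,b]\to\mathbb R$ be a polynomial with $\varphi^{(k)}(a)=\varphi^{(k)}(b)=0$ for $k=0,1,2,3$, extended by zero outside $[a,b]$. For $x\in\mathbb R$, $(\xi(t,x),\eta(t,x))$ is the unique global solution of $$\frac{d\xi}{dt}=-w'(\xi)\varphi(\xi)-(\eta-w(\xi))\varphi'(\xi),\quad\frac{d\eta}{dt}=\varphi(\xi),\quad \xi(0)=x,\ \eta(0)=w(x).$$ For $s\in[0,1]$, $t_0(s,x)\ge0$ denotes the first time $t\ge0$ with $\eta(t,x)=w(\xi(t,x))+s\varphi(\xi(t,x))$ (this first time exists and satisfies $t_0(s,x)\le s$; $t_0=0$ when $s=0$ or $\varphi(x)=0$). *)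

theory Defs
  imports "HOL-Analysis.Analysis" "HOL-Computational_Algebra.Polynomial"
begin

definition Ck_real :: "nat \<Rightarrow> (real \<Rightarrow> real) \<Rightarrow> bool" where
  "Ck_real k f \<longleftrightarrow> (\<forall>j<k. \<forall>x. ((deriv ^^ j) f) differentiable (at x))
                    \<and> continuous_on UNIV ((deriv ^^ k) f)"

definition C2_on :: "('a::real_normed_vector \<Rightarrow> 'b::real_normed_vector) \<Rightarrow> 'a set \<Rightarrow> bool" where
  "C2_on f S \<longleftrightarrow> (\<exists>f' f''.
      (\<forall>p\<in>S. (f has_derivative blinfun_apply (f' p)) (at p within S)) \<and>
      (\<forall>p\<in>S. (f' has_derivative blinfun_apply (f'' p)) (at p within S)) \<and>
      continuous_on S f'')"

definition first_time ::
  "(real \<Rightarrow> real \<Rightarrow> real) \<Rightarrow> (real \<Rightarrow> real \<Rightarrow> real) \<Rightarrow> (real \<Rightarrow> real) \<Rightarrow> (real \<Rightarrow> real)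
     \<Rightarrow> real \<Rightarrow> real \<Rightarrow> real" where
  "first_time \<xi> \<eta> w \<phi> s x = Inf {t. t \<ge> 0 \<and> \<eta> t x = w (\<xi> t x) + s * \<phi> (\<xi> t x)}"

end

theory Submission
  imports Defs
begin

definition SS :: "(real \<times> real) set" where "SS = {0..1} \<times> UNIV"

definition C1S :: "(real \<times> real) set \<Rightarrow> (real \<times> real \<Rightarrow> real) \<Rightarrow> (real \<times> real \<Rightarrow> real) \<Rightarrow> (real \<times> real \<Rightarrow> real) \<Rightarrow> bool" where
  "C1S S f f1 f2 \<longleftrightarrow> (\<forall>p\<in>S. (f has_derivative (\<lambda>h. f1 p * fst h + f2 p * snd h)) (at p within S))
      \<and> continuous_on S f1 \<and> continuous_on S f2"

lemma bl_fst2: "bounded_linear (\<lambda>h::real\<times>real. fst h)" by (rule bounded_linear_fst)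
lemma bl_snd2: "bounded_linear (\<lambda>h::real\<times>real. snd h)" by (rule bounded_linear_snd)

lemma C1S_continuous: "C1S S f f1 f2 \<Longrightarrow> continuous_on S f"
  unfolding C1S_def continuous_on_eq_continuous_within
  using has_derivative_continuous by blast

lemma C2_from_C1S:
  assumes A: "C1S S f f1 f2" and B: "C1S S f1 a1 b1" and C: "C1S S f2 a2 b2"
  shows "C2_on f S"
proof -
  define L1 :: "(real \<times> real) \<Rightarrow>\<^sub>L real" where "L1 = Blinfun fst"
  define L2 :: "(real \<times> real) \<Rightarrow>\<^sub>L real" where "L2 = Blinfun snd"
  have L1: "blinfun_apply L1 = fst" unfolding L1_def
    by (rule bounded_linear_Blinfun_apply[OF bounded_linear_fst])
  have L2: "blinfun_apply L2 = snd" unfolding L2_def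
    by (rule bounded_linear_Blinfun_apply[OF bounded_linear_snd])
  define M1 :: "(real \<times> real) \<Rightarrow>\<^sub>L ((real \<times> real) \<Rightarrow>\<^sub>L real)" where "M1 = Blinfun (\<lambda>h. fst h *\<^sub>R L1)"
  define M2 :: "(real \<times> real) \<Rightarrow>\<^sub>L ((real \<times> real) \<Rightarrow>\<^sub>L real)" where "M2 = Blinfun (\<lambda>h. snd h *\<^sub>R L1)"
  define M3 :: "(real \<times> real) \<Rightarrow>\<^sub>L ((real \<times> real) \<Rightarrow>\<^sub>L real)" where "M3 = Blinfun (\<lambda>h. fst h *\<^sub>R L2)"
  define M4 :: "(real \<times> real) \<Rightarrow>\<^sub>L ((real \<times> real) \<Rightarrow>\<^sub>L real)" where "M4 = Blinfun (\<lambda>h. snd h *\<^sub>R L2)"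
  have blM: "bounded_linear (\<lambda>h::real\<times>real. fst h *\<^sub>R L)" "bounded_linear (\<lambda>h::real\<times>real. snd h *\<^sub>R L)"
    for L :: "(real \<times> real) \<Rightarrow>\<^sub>L real"
    by (auto intro!: bounded_linear_compose[OF bounded_linear_scaleR_left] bounded_linear_fst bounded_linear_snd)
  have M1: "blinfun_apply M1 = (\<lambda>h. fst h *\<^sub>R L1)" unfolding M1_def by (rule bounded_linear_Blinfun_apply[OF blM(1)])
  have M2: "blinfun_apply M2 = (\<lambda>h. snd h *\<^sub>R L1)" unfolding M2_def by (rule bounded_linear_Blinfun_apply[OF blM(2)])
  have M3: "blinfun_apply M3 = (\<lambda>h. fst h *\<^sub>R L2)" unfolding M3_def by (rule bounded_linear_Blinfun_apply[OF blM(1)])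
  have M4: "blinfun_apply M4 = (\<lambda>h. snd h *\<^sub>R L2)" unfolding M4_def by (rule bounded_linear_Blinfun_apply[OF blM(2)])
  define f' where "f' p = f1 p *\<^sub>R L1 + f2 p *\<^sub>R L2" for p
  define f'' where "f'' p = a1 p *\<^sub>R M1 + b1 p *\<^sub>R M2 + a2 p *\<^sub>R M3 + b2 p *\<^sub>R M4" for p
  have 1: "\<forall>p\<in>S. (f has_derivative blinfun_apply (f' p)) (at p within S)"
  proof
    fix p assume "p \<in> S"
    then have "(f has_derivative (\<lambda>h. f1 p * fst h + f2 p * snd h)) (at p within S)"
      using A unfolding C1S_def by blast
    moreover have "blinfun_apply (f' p) = (\<lambda>h. f1 p * fst h + f2 p * snd h)"
      by (auto simp: f'_def L1 L2 blinfun.add_left blinfun.scaleR_left fun_eq_iff)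
    ultimately show "(f has_derivative blinfun_apply (f' p)) (at p within S)" by simp
  qed
  have 2: "\<forall>p\<in>S. (f' has_derivative blinfun_apply (f'' p)) (at p within S)"
  proof
    fix p assume p: "p \<in> S"
    have d1: "(f1 has_derivative (\<lambda>h. a1 p * fst h + b1 p * snd h)) (at p within S)"
      using B p unfolding C1S_def by blast
    have d2: "(f2 has_derivative (\<lambda>h. a2 p * fst h + b2 p * snd h)) (at p within S)"
      using C p unfolding C1S_def by blast
    have "(f' has_derivative (\<lambda>h. (a1 p * fst h + b1 p * snd h) *\<^sub>R L1 + (a2 p * fst h + b2 p * snd h) *\<^sub>R L2)) (at p within S)"
      unfolding f'_def[abs_def]
      by (intro has_derivative_add has_derivative_scaleR_left d1 d2)
    moreover have "blinfun_apply (f'' p) = (\<lambda>h. (a1 p * fst h + b1 p * snd h) *\<^sub>R L1 + (a2 p * fst h + b2 p * snd h) *\<^sub>R L2)"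
      by (auto simp: f''_def M1 M2 M3 M4 blinfun.add_left blinfun.scaleR_left fun_eq_iff algebra_simps)
    ultimately show "(f' has_derivative blinfun_apply (f'' p)) (at p within S)" by simp
  qed
  have 3: "continuous_on S f''"
    unfolding f''_def[abs_def]
    using B C unfolding C1S_def
    by (intro continuous_intros) auto
  show ?thesis unfolding C2_on_def using 1 2 3 by blast
qed

lemma C1S_const: "C1S S (\<lambda>p. c) (\<lambda>p. 0) (\<lambda>p. 0)"
  unfolding C1S_def by (auto intro!: derivative_eq_intros)

lemma C1S_fst: "C1S S fst (\<lambda>p. 1) (\<lambda>p. 0)"
  unfolding C1S_def by (auto intro!: derivative_eq_intros)

lemma C1S_snd: "C1S S snd (\<lambda>p. 0) (\<lambda>p. 1)"
  unfolding C1S_def by (auto intro!: derivative_eq_intros)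

lemma C1S_add:
  assumes "C1S S f f1 f2" "C1S S g g1 g2"
  shows "C1S S (\<lambda>p. f p + g p) (\<lambda>p. f1 p + g1 p) (\<lambda>p. f2 p + g2 p)"
  using assms unfolding C1S_def
  by (auto intro!: derivative_eq_intros continuous_intros simp: algebra_simps)

lemma C1S_mult:
  assumes f: "C1S S f f1 f2" and g: "C1S S g g1 g2"
  shows "C1S S (\<lambda>p. f p * g p) (\<lambda>p. f1 p * g p + f p * g1 p) (\<lambda>p. f2 p * g p + f p * g2 p)"
proof -
  have cf: "continuous_on S f" and cg: "continuous_on S g" using f g C1S_continuous by auto
  have "((\<lambda>p. f p * g p) has_derivative (\<lambda>h. (f1 p * g p + f p * g1 p) * fst h + (f2 p * g p + f p * g2 p) * snd h)) (at p within S)"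
    if p: "p \<in> S" for p
  proof -
    have df: "(f has_derivative (\<lambda>h. f1 p * fst h + f2 p * snd h)) (at p within S)"
      using f p unfolding C1S_def by blast
    have dg: "(g has_derivative (\<lambda>h. g1 p * fst h + g2 p * snd h)) (at p within S)"
      using g p unfolding C1S_def by blast
    show ?thesis
      by (rule has_derivative_eq_rhs[OF has_derivative_mult[OF df dg]]) (auto simp: fun_eq_iff algebra_simps)
  qed
  moreover have "continuous_on S (\<lambda>p. f1 p * g p + f p * g1 p)" "continuous_on S (\<lambda>p. f2 p * g p + f p * g2 p)"
    using f g cf cg unfolding C1S_def by (auto intro!: continuous_intros)
  ultimately show ?thesis unfolding C1S_def by blast
qed

lemma C1S_comp:
  assumes k: "\<And>y. (k has_real_derivative k' y) (at y)" and ck: "continuous_on UNIV k'"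
    and f: "C1S S f f1 f2"
  shows "C1S S (\<lambda>p. k (f p)) (\<lambda>p. k' (f p) * f1 p) (\<lambda>p. k' (f p) * f2 p)"
proof -
  have cf: "continuous_on S f" using f C1S_continuous by auto
  have "((\<lambda>p. k (f p)) has_derivative (\<lambda>h. k' (f p) * f1 p * fst h + k' (f p) * f2 p * snd h)) (at p within S)"
    if p: "p \<in> S" for p
  proof -
    have df: "(f has_derivative (\<lambda>h. f1 p * fst h + f2 p * snd h)) (at p within S)"
      using f p unfolding C1S_def by blast
    have dk: "(k has_derivative (*) (k' (f p))) (at (f p))"
      using k[of "f p"] unfolding has_field_derivative_def .
    show ?thesis
      by (rule has_derivative_eq_rhs[OF has_derivative_compose[OF df dk]]) (auto simp: algebra_simps)
  qed
  moreover have "continuous_on S (\<lambda>p. k' (f p) * f1 p)" "continuous_on S (\<lambda>p. k' (f p) * f2 p)"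
    using f cf unfolding C1S_def
    by (auto intro!: continuous_intros continuous_on_compose2[OF ck cf])
  ultimately show ?thesis unfolding C1S_def by blast
qed

lemma C1S_cong:
  assumes "C1S S f f1 f2" "\<And>p. p \<in> S \<Longrightarrow> g p = f p" "\<And>p. p \<in> S \<Longrightarrow> g1 p = f1 p" "\<And>p. p \<in> S \<Longrightarrow> g2 p = f2 p"
  shows "C1S S g g1 g2"
proof -
  have "(g has_derivative (\<lambda>h. g1 p * fst h + g2 p * snd h)) (at p within S)" if p: "p \<in> S" for p
    using assms(1) p assms(2-4) unfolding C1S_def
    by (auto intro: has_derivative_transform_within[where d=1])
  moreover have "continuous_on S g1" "continuous_on S g2"
    using assms unfolding C1S_def by (auto intro: continuous_on_cong[THEN iffD1])
  ultimately show ?thesis unfolding C1S_def by blast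
qed


lemma dist_pair_fst: "\<bar>a - c\<bar> \<le> dist (a, b) (c::real, d::real)"
  by (metis dist_fst_le dist_real_def fst_conv)
lemma dist_pair_snd: "\<bar>b - d\<bar> \<le> dist (a, b) (c::real, d::real)"
  by (metis dist_snd_le dist_real_def snd_conv)
lemma norm_pair_fst: "\<bar>a\<bar> \<le> norm (a::real, b::real)"
  by (metis norm_fst_le fst_conv real_norm_def)
lemma norm_pair_snd: "\<bar>b\<bar> \<le> norm (a::real, b::real)"
  by (metis norm_snd_le snd_conv real_norm_def)

lemma C1S_partials:
  assumes ds: "\<And>s x. s \<in> {0..1} \<Longrightarrow> ((\<lambda>s. f (s,x)) has_real_derivative fs (s,x)) (at s within {0..1})"
    and dx: "\<And>s x. s \<in> {0..1} \<Longrightarrow> ((\<lambda>x. f (s,x)) has_real_derivative fx (s,x)) (at x)"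
    and cs: "continuous_on SS fs" and cx: "continuous_on SS fx"
  shows "C1S SS f fs fx"
proof -
  have "(f has_derivative (\<lambda>h. fs p * fst h + fx p * snd h)) (at p within SS)" if p: "p \<in> SS" for p
  proof -
    obtain s x where px: "p = (s,x)" by (cases p)
    have s01: "s \<in> {0..1}" using p px by (auto simp: SS_def)
    have bl: "bounded_linear (\<lambda>h::real\<times>real. fs p * fst h + fx p * snd h)"
      by (intro bounded_linear_add bounded_linear_compose[OF bounded_linear_mult_right] bounded_linear_fst bounded_linear_snd)
    show ?thesis unfolding has_derivative_within_alt
    proof (intro conjI bl allI impI)
      fix e :: real assume e: "e > 0"
      obtain d1 where d1: "d1 > 0" "\<And>p'. p' \<in> SS \<Longrightarrow> dist p' p < d1 \<Longrightarrow> dist (fs p') (fs p) < e/2"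
        using cs p e unfolding continuous_on_iff by (metis half_gt_zero)
      have "(((\<lambda>x. f (s,x)) has_derivative (*) (fx (s,x))) (at x within UNIV))"
        using dx[OF s01, of x] by (simp add: has_field_derivative_def)
      then obtain d2 where d2: "d2 > 0" "\<And>x'. norm (x' - x) < d2 \<Longrightarrow>
          norm (f (s,x') - f (s,x) - fx (s,x) * (x' - x)) \<le> e/2 * norm (x' - x)"
        unfolding has_derivative_within_alt using e by (metis UNIV_I half_gt_zero)
      show "\<exists>d>0. \<forall>y\<in>SS. norm (y - p) < d \<longrightarrow> norm (f y - f p - (fs p * fst (y - p) + fx p * snd (y - p))) \<le> e * norm (y - p)"
      proof (intro exI[of _ "min d1 d2"] conjI ballI impI)
        show "min d1 d2 > 0" using d1 d2 by simp
        fix q assume q: "q \<in> SS" and nq: "norm (q - p) < min d1 d2"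
        obtain s' x' where qx: "q = (s',x')" by (cases q)
        have s'01: "s' \<in> {0..1}" using q qx by (auto simp: SS_def)
        have hs: "\<bar>s' - s\<bar> \<le> norm (q - p)" and hx: "\<bar>x' - x\<bar> \<le> norm (q - p)"
          using norm_pair_fst[where a="s'-s" and b="x'-x"] norm_pair_snd[where a="s'-s" and b="x'-x"] by (auto simp: px qx)
        define T where "T = {min s s'..max s s'}"
        have T01: "T \<subseteq> {0..1}" using s01 s'01 by (auto simp: T_def)
        have der: "((\<lambda>\<sigma>. f (\<sigma>,x') - fs (s,x) * \<sigma>) has_real_derivative (fs (\<sigma>,x') - fs (s,x))) (at \<sigma> within T)"
          if "\<sigma> \<in> T" for \<sigma>
          using that T01
          by (auto intro!: derivative_eq_intros has_field_derivative_subset[OF ds] simp: )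
        have bnd: "norm (fs (\<sigma>,x') - fs (s,x)) \<le> e/2" if "\<sigma> \<in> T" for \<sigma>
        proof -
          have "dist (\<sigma>, x') (s, x) \<le> dist (s',x') (s,x)"
            using that unfolding T_def dist_Pair_Pair dist_real_def
            by (intro real_sqrt_le_mono add_right_mono) (auto simp: abs_le_square_iff[symmetric] abs_le_iff)
          also have "\<dots> = norm (q - p)" by (simp add: px qx dist_norm)
          finally have "dist (\<sigma>, x') p < d1" using nq px by simp
          moreover have "(\<sigma>,x') \<in> SS" using that T01 by (auto simp: SS_def)
          ultimately show ?thesis using d1(2)[of "(\<sigma>,x')"] by (simp add: dist_norm px)
        qed
        have "norm ((f (s',x') - fs (s,x) * s') - (f (s,x') - fs (s,x) * s)) \<le> e/2 * norm (s' - s)"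
          by (rule field_differentiable_bound[of T, OF _ der bnd]) (auto simp: T_def)
        hence A1: "\<bar>f (s',x') - f (s,x') - fs (s,x) * (s' - s)\<bar> \<le> e/2 * \<bar>s' - s\<bar>"
          by (simp add: algebra_simps)
        have A2: "\<bar>f (s,x') - f (s,x) - fx (s,x) * (x' - x)\<bar> \<le> e/2 * \<bar>x' - x\<bar>"
          using d2(2)[of x'] hx nq by simp
        have "\<bar>f (s',x') - f (s,x) - (fs (s,x) * (s'-s) + fx (s,x) * (x'-x))\<bar> \<le> e/2 * \<bar>s' - s\<bar> + e/2 * \<bar>x' - x\<bar>"
          using A1 A2 by linarith
        also have "\<dots> \<le> e/2 * norm (q-p) + e/2 * norm (q-p)"
          using hs hx e by (intro add_mono mult_left_mono) auto
        finally show "norm (f q - f p - (fs p * fst (q - p) + fx p * snd (q - p))) \<le> e * norm (q - p)"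
          by (simp add: px qx)
      qed
    qed
  qed
  then show ?thesis using cs cx unfolding C1S_def by blast
qed

lemma joint_cont:
  assumes B: "B \<ge> 0"
    and lip: "\<And>s s' x. s \<in> {0..1} \<Longrightarrow> s' \<in> {0..1} \<Longrightarrow> \<bar>f (s',x) - f (s,x)\<bar> \<le> B * \<bar>s' - s\<bar>"
    and cx: "\<And>s. s \<in> {0..1} \<Longrightarrow> continuous_on UNIV (\<lambda>x. f (s,x))"
  shows "continuous_on SS f"
  unfolding continuous_on_iff
proof (intro ballI allI impI)
  fix p e assume p: "p \<in> SS" and e: "(e::real) > 0"
  obtain s x where px: "p = (s,x)" by (cases p)
  have s01: "s \<in> {0..1}" using p px by (auto simp: SS_def)
  obtain d where d: "d > 0" "\<And>x'. dist x' x < d \<Longrightarrow> dist (f (s,x')) (f (s,x)) < e/2"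
    using cx[OF s01] e unfolding continuous_on_iff by (metis UNIV_I half_gt_zero)
  show "\<exists>d>0. \<forall>x'\<in>SS. dist x' p < d \<longrightarrow> dist (f x') (f p) < e"
  proof (intro exI[of _ "min d (e/(2*(B+1)))"] conjI ballI impI)
    show "min d (e/(2*(B+1))) > 0" using d e B by simp
    fix q assume q: "q \<in> SS" and dq: "dist q p < min d (e/(2*(B+1)))"
    obtain s' x' where qx: "q = (s',x')" by (cases q)
    have s'01: "s' \<in> {0..1}" using q qx by (auto simp: SS_def)
    have hs: "\<bar>s' - s\<bar> < e/(2*(B+1))" and hx: "dist x' x < d"
      using dist_pair_fst[where a=s' and b=x' and c=s and d=x] dist_pair_snd[where a=s' and b=x' and c=s and d=x] dq by (auto simp: px qx dist_real_def)
    have "B * \<bar>s' - s\<bar> \<le> (B+1) * (e/(2*(B+1)))"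
      using hs B by (intro mult_mono) auto
    also have "\<dots> = e/2" using B by (simp add: field_simps)
    finally have "\<bar>f (s',x') - f (s,x')\<bar> \<le> e/2" using lip[OF s01 s'01, of x'] by linarith
    moreover have "\<bar>f (s,x') - f (s,x)\<bar> < e/2" using d(2)[OF hx] by (simp add: dist_real_def)
    ultimately show "dist (f q) (f p) < e" unfolding px qx dist_real_def by linarith
  qed
qed


lemma nonincr01:
  fixes V V' :: "real \<Rightarrow> real"
  assumes d: "\<And>t. t \<in> {0..1} \<Longrightarrow> (V has_real_derivative V' t) (at t within {0..1})"
    and n: "\<And>t. t \<in> {0..1} \<Longrightarrow> V' t \<le> 0" and s: "s \<in> {0..1}"
  shows "V s \<le> V 0"
proof -
  have "\<exists>c\<in>{0..s}. V s - V 0 = (\<lambda>h. V' c * h) (s - 0)"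
    apply (rule mvt_very_simple)
    using s apply simp
    using s by (auto intro!: has_field_derivative_subset[OF d, unfolded has_field_derivative_def, THEN has_derivative_eq_rhs]
        simp: fun_eq_iff mult.commute)
  then obtain c where c: "c \<in> {0..s}" "V s - V 0 = V' c * s" by auto
  have "V' c * s \<le> 0" using n[of c] c(1) s by (intro mult_nonpos_nonneg) auto
  then show ?thesis using c by simp
qed

lemma quad_deriv:
  fixes f :: "real \<Rightarrow> real"
  assumes C: "C \<ge> 0" and b: "\<And>x'. \<bar>f x' - f x - D * (x' - x)\<bar> \<le> C * (x' - x)\<^sup>2"
  shows "(f has_real_derivative D) (at x)"
  unfolding has_field_derivative_def has_derivative_within_alt
proof (intro conjI allI impI)
  show "bounded_linear ((*) D)" by (rule bounded_linear_mult_right)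
  fix e :: real assume e: "e > 0"
  show "\<exists>d>0. \<forall>y\<in>UNIV. norm (y - x) < d \<longrightarrow> norm (f y - f x - D * (y - x)) \<le> e * norm (y - x)"
  proof (intro exI[of _ "e/(C+1)"] conjI ballI impI)
    show "e/(C+1) > 0" using e C by simp
    fix y :: real assume "y \<in> UNIV" "norm (y - x) < e/(C+1)"
    hence h: "\<bar>y - x\<bar> * (C+1) \<le> e" using C by (simp add: field_simps)
    have "\<bar>f y - f x - D * (y - x)\<bar> \<le> C * (y - x)\<^sup>2" by (rule b)
    also have "\<dots> = (C * \<bar>y - x\<bar>) * \<bar>y - x\<bar>" by (simp add: power2_eq_square abs_mult_self_eq)
    also have "\<dots> \<le> e * \<bar>y - x\<bar>"
      using h C by (intro mult_right_mono) (auto simp: algebra_simps)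
    finally show "norm (f y - f x - D * (y - x)) \<le> e * norm (y - x)" by simp
  qed
qed

locale flow =
  fixes F F1 F2 Fs :: "real \<Rightarrow> real \<Rightarrow> real" and y :: "real \<Rightarrow> real \<Rightarrow> real" and L K M :: real
  assumes dF: "\<And>s v. ((\<lambda>p. F (fst p) (snd p)) has_derivative (\<lambda>h. Fs s v * fst h + F1 s v * snd h)) (at (s,v))"
    and dF1: "\<And>s v. ((\<lambda>v. F1 s v) has_real_derivative F2 s v) (at v)"
    and cF: "continuous_on UNIV (\<lambda>p. F (fst p) (snd p))"
    and cF1: "continuous_on UNIV (\<lambda>p. F1 (fst p) (snd p))"
    and cF2: "continuous_on UNIV (\<lambda>p. F2 (fst p) (snd p))"
    and cFs: "continuous_on UNIV (\<lambda>p. Fs (fst p) (snd p))"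
    and bF: "\<And>s v. s \<in> {0..1} \<Longrightarrow> \<bar>F s v\<bar> \<le> M"
    and bF1: "\<And>s v. s \<in> {0..1} \<Longrightarrow> \<bar>F1 s v\<bar> \<le> L"
    and bF2: "\<And>s v. s \<in> {0..1} \<Longrightarrow> \<bar>F2 s v\<bar> \<le> K"
    and LKM: "L \<ge> 0" "K \<ge> 0" "M \<ge> 0"
    and y_der: "\<And>s x. s \<in> {0..1} \<Longrightarrow> ((\<lambda>s. y s x) has_real_derivative F s (y s x)) (at s within {0..1})"
    and y0: "\<And>x. y 0 x = x"
begin

lemma dFv: "((\<lambda>v. F s v) has_real_derivative F1 s v) (at v)"
proof -
  have "((\<lambda>v. (\<lambda>p. F (fst p) (snd p)) (s, v)) has_derivative (\<lambda>h. Fs s v * fst (0, h) + F1 s v * snd (0, h))) (at v)"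
    using has_derivative_compose[OF has_derivative_Pair[OF has_derivative_const has_derivative_ident] dF[of s v]]
    by simp
  then have "(F s has_derivative (*) (F1 s v)) (at v)" by simp
  then show ?thesis unfolding has_field_derivative_def by simp
qed

lemma contF_at: "isCont (\<lambda>p. F (fst p) (snd p)) p" using cF continuous_on_eq_continuous_at by blast
lemma contF1_at: "isCont (\<lambda>p. F1 (fst p) (snd p)) p" using cF1 continuous_on_eq_continuous_at by blast
lemma contF2_at: "isCont (\<lambda>p. F2 (fst p) (snd p)) p" using cF2 continuous_on_eq_continuous_at by blast

lemma F_lip: "s \<in> {0..1} \<Longrightarrow> \<bar>F s v' - F s v\<bar> \<le> L * \<bar>v' - v\<bar>"
  using field_differentiable_bound[of UNIV "\<lambda>v. F s v" "\<lambda>v. F1 s v" L v' v] dFv bF1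
  by (auto intro: has_field_derivative_at_within)

lemma F1_lip: "s \<in> {0..1} \<Longrightarrow> \<bar>F1 s v' - F1 s v\<bar> \<le> K * \<bar>v' - v\<bar>"
  using field_differentiable_bound[of UNIV "\<lambda>v. F1 s v" "\<lambda>v. F2 s v" K v' v] dF1 bF2
  by (auto intro: has_field_derivative_at_within)

lemma F_taylor:
  assumes s: "s \<in> {0..1}"
  shows "\<bar>F s v' - F s v - F1 s v * (v' - v)\<bar> \<le> K * (v' - v)\<^sup>2"
proof -
  define T where "T = {min v v'..max v v'}"
  have der: "((\<lambda>u. F s u - F1 s v * u) has_real_derivative (F1 s u - F1 s v)) (at u within T)" for u
    by (auto intro!: derivative_eq_intros has_field_derivative_at_within[OF dFv])
  have bnd: "norm (F1 s u - F1 s v) \<le> K * \<bar>v' - v\<bar>" if "u \<in> T" for u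
  proof -
    have "\<bar>F1 s u - F1 s v\<bar> \<le> K * \<bar>u - v\<bar>" by (rule F1_lip[OF s])
    also have "\<dots> \<le> K * \<bar>v' - v\<bar>" using that LKM by (intro mult_left_mono) (auto simp: T_def)
    finally show ?thesis by simp
  qed
  have "norm ((F s v' - F1 s v * v') - (F s v - F1 s v * v)) \<le> K * \<bar>v' - v\<bar> * norm (v' - v)"
    by (rule field_differentiable_bound[of T, OF _ der bnd]) (auto simp: T_def)
  then show ?thesis by (simp add: algebra_simps power2_eq_square abs_mult_self_eq)
qed

lemma y_cont_s: "continuous_on {0..1} (\<lambda>s. y s x)"
  by (rule DERIV_continuous_on[OF y_der])

lemma y_lip_s: "s \<in> {0..1} \<Longrightarrow> s' \<in> {0..1} \<Longrightarrow> \<bar>y s' x - y s x\<bar> \<le> M * \<bar>s' - s\<bar>"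
  using field_differentiable_bound[of "{0..1}" "\<lambda>s. y s x" "\<lambda>s. F s (y s x)" M s' s] y_der bF
  by auto

lemma y_lip_x:
  assumes s: "s \<in> {0..1}"
  shows "\<bar>y s x' - y s x\<bar> \<le> exp L * \<bar>x' - x\<bar>"
proof -
  define V where "V t = (y t x' - y t x)\<^sup>2 * exp (- 2 * L * t)" for t
  define V' where "V' t = (2 * ((y t x' - y t x) * (F t (y t x') - F t (y t x))) - 2 * L * (y t x' - y t x)\<^sup>2) * exp (- 2 * L * t)" for t
  have d: "(V has_real_derivative V' t) (at t within {0..1})" if "t \<in> {0..1}" for t
    unfolding V_def[abs_def] V'_def
    by (rule derivative_eq_intros y_der that refl | simp add: algebra_simps power2_eq_square)+
  have n: "V' t \<le> 0" if t: "t \<in> {0..1}" for t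
  proof -
    have "(y t x' - y t x) * (F t (y t x') - F t (y t x)) \<le> \<bar>y t x' - y t x\<bar> * \<bar>F t (y t x') - F t (y t x)\<bar>"
      by (metis abs_ge_self abs_mult)
    also have "\<dots> \<le> \<bar>y t x' - y t x\<bar> * (L * \<bar>y t x' - y t x\<bar>)"
      by (intro mult_left_mono F_lip t) auto
    also have "\<dots> = L * (y t x' - y t x)\<^sup>2" by (simp add: power2_eq_square abs_mult_self_eq)
    finally have "2 * ((y t x' - y t x) * (F t (y t x') - F t (y t x))) - 2 * L * (y t x' - y t x)\<^sup>2 \<le> 0"
      by linarith
    then show ?thesis unfolding V'_def by (intro mult_nonpos_nonneg) auto
  qed
  have "V s \<le> V 0" by (rule nonincr01[OF d n s])
  hence "(y s x' - y s x)\<^sup>2 \<le> (x' - x)\<^sup>2 * exp (2 * L * s)"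
    by (simp add: V_def y0 exp_minus field_simps)
  also have "\<dots> \<le> (x' - x)\<^sup>2 * exp (2 * L)"
    using s LKM by (intro mult_left_mono) (auto simp: mult_left_le)
  also have "\<dots> = (exp L * \<bar>x' - x\<bar>)\<^sup>2"
  proof -
    have "exp (2*L) = exp L * exp L" by (simp add: exp_add[symmetric])
    then show ?thesis by (simp add: power2_eq_square abs_mult_self_eq mult_ac)
  qed
  finally have "\<bar>y s x' - y s x\<bar>\<^sup>2 \<le> (exp L * \<bar>x' - x\<bar>)\<^sup>2" by simp
  then show ?thesis by (rule power2_le_imp_le) simp
qed

end


lemma cont_comp2:
  assumes G: "continuous_on UNIV (\<lambda>p. G (fst p) (snd p))" and a: "continuous_on S A" and b: "continuous_on S B"
  shows "continuous_on S (\<lambda>p. G (A p) (B p))"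
  using continuous_on_compose2[OF G continuous_on_Pair[OF a b]] by simp

context flow
begin

definition I where "I s x = integral {0..s} (\<lambda>\<sigma>. F1 \<sigma> (y \<sigma> x))"
definition q where "q s x = exp (I s x)"
definition J where "J s x = integral {0..s} (\<lambda>\<sigma>. F2 \<sigma> (y \<sigma> x) * q \<sigma> x)"

lemma y_cont_x: "continuous_on UNIV (\<lambda>x. y s x)" if "s \<in> {0..1}"
proof -
  have "(exp L)-lipschitz_on UNIV (\<lambda>x. y s x)"
    by (rule lipschitz_onI) (use y_lip_x[OF that] in \<open>auto simp: dist_real_def\<close>)
  then show ?thesis by (rule lipschitz_on_continuous_on)
qed

lemma y_cont: "continuous_on SS (\<lambda>p. y (fst p) (snd p))"
  by (rule joint_cont[of M]) (auto simp: LKM y_lip_s y_cont_x)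

lemma y_cont_sub: "continuous_on T (\<lambda>p. y (fst p) (snd p))" if "T \<subseteq> SS"
  using continuous_on_subset[OF y_cont that] .

lemma cont_F1y: "continuous_on {0..1} (\<lambda>\<sigma>. F1 \<sigma> (y \<sigma> x))"
  by (rule cont_comp2[OF cF1]) (auto intro: continuous_intros y_cont_s)

lemma I_der_s: "s \<in> {0..1} \<Longrightarrow> ((\<lambda>s. I s x) has_real_derivative F1 s (y s x)) (at s within {0..1})"
  unfolding I_def by (rule integral_has_real_derivative[OF cont_F1y])

lemma I_bound: "s \<in> {0..1} \<Longrightarrow> \<bar>I s x\<bar> \<le> L * s"
  unfolding I_def
  using integral_bound[of 0 s "\<lambda>\<sigma>. F1 \<sigma> (y \<sigma> x)" L] continuous_on_subset[OF cont_F1y] bF1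
  by auto

lemma I_bound': "s \<in> {0..1} \<Longrightarrow> \<bar>I s x\<bar> \<le> L"
  using I_bound[of s x] LKM by (auto simp: mult_left_le intro: order_trans)

lemma q0: "q 0 x = 1" by (simp add: q_def I_def)

lemma q_pos: "q s x > 0" by (simp add: q_def)

lemma q_bound: "s \<in> {0..1} \<Longrightarrow> \<bar>q s x\<bar> \<le> exp L"
  using I_bound'[of s x] by (simp add: q_def)

lemma q_der_s: "s \<in> {0..1} \<Longrightarrow> ((\<lambda>s. q s x) has_real_derivative F1 s (y s x) * q s x) (at s within {0..1})"
  unfolding q_def by (auto intro!: derivative_eq_intros I_der_s)

lemma y_der_x:
  assumes s: "s \<in> {0..1}"
  shows "((\<lambda>x. y s x) has_real_derivative q s x) (at x)"
proof -
  define C where "C = K * exp L * exp L * exp L * exp L"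
  have C: "C \<ge> 0" using LKM by (simp add: C_def)
  have "\<bar>y s x' - y s x - q s x * (x' - x)\<bar> \<le> C * (x' - x)\<^sup>2" for x'
  proof -
    define v where "v t = (y t x' - y t x - (x' - x) * q t x) * exp (- I t x)" for t
    define v' where "v' t = (F t (y t x') - F t (y t x) - F1 t (y t x) * (y t x' - y t x)) * exp (- I t x)" for t
    have d: "(v has_real_derivative v' t) (at t within {0..1})" if t: "t \<in> {0..1}" for t
      unfolding v_def[abs_def] v'_def
      apply (rule derivative_eq_intros y_der q_der_s I_der_s t refl)+
      apply (simp add: algebra_simps)
      done
    have bnd: "norm (v' t) \<le> K * (exp L * \<bar>x' - x\<bar>)\<^sup>2 * exp L" if t: "t \<in> {0..1}" for t
    proof -
      have "\<bar>F t (y t x') - F t (y t x) - F1 t (y t x) * (y t x' - y t x)\<bar> \<le> K * (y t x' - y t x)\<^sup>2"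
        by (rule F_taylor[OF t])
      also have "\<dots> \<le> K * (exp L * \<bar>x' - x\<bar>)\<^sup>2"
      proof -
        have "\<bar>y t x' - y t x\<bar> \<le> exp L * \<bar>x' - x\<bar>" by (rule y_lip_x[OF t])
        hence "\<bar>y t x' - y t x\<bar>\<^sup>2 \<le> (exp L * \<bar>x' - x\<bar>)\<^sup>2" by (intro power_mono) auto
        thus ?thesis using LKM by (intro mult_left_mono) auto
      qed
      finally have A: "\<bar>F t (y t x') - F t (y t x) - F1 t (y t x) * (y t x' - y t x)\<bar> \<le> K * (exp L * \<bar>x' - x\<bar>)\<^sup>2" .
      have B: "exp (- I t x) \<le> exp L" using I_bound'[OF t, of x] by simp
      have "norm (v' t) = \<bar>F t (y t x') - F t (y t x) - F1 t (y t x) * (y t x' - y t x)\<bar> * exp (- I t x)"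
        by (simp add: v'_def abs_mult)
      also have "\<dots> \<le> K * (exp L * \<bar>x' - x\<bar>)\<^sup>2 * exp L"
        using A B by (intro mult_mono) auto
      finally show ?thesis .
    qed
    have "norm (v s - v 0) \<le> K * (exp L * \<bar>x' - x\<bar>)\<^sup>2 * exp L * norm (s - 0)"
      by (rule field_differentiable_bound[of "{0..1}", OF _ d bnd]) (use s in auto)
    also have "\<dots> \<le> K * (exp L * \<bar>x' - x\<bar>)\<^sup>2 * exp L * 1"
      using s LKM by (intro mult_left_mono) auto
    finally have vs: "\<bar>v s\<bar> \<le> K * (exp L * \<bar>x' - x\<bar>)\<^sup>2 * exp L"
      by (simp add: v_def y0 q0)
    have "\<bar>y s x' - y s x - q s x * (x' - x)\<bar> = \<bar>v s\<bar> * exp (I s x)"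
      by (simp add: v_def abs_mult exp_minus field_simps)
    also have "\<dots> \<le> K * (exp L * \<bar>x' - x\<bar>)\<^sup>2 * exp L * exp L"
      using vs I_bound'[OF s, of x] by (intro mult_mono) auto
    also have "\<dots> = C * (x' - x)\<^sup>2"
      by (simp add: C_def power2_eq_square abs_mult_self_eq mult_ac)
    finally show ?thesis .
  qed
  then show ?thesis by (rule quad_deriv[OF C])
qed

end


context flow
begin

lemma I_lip_s: "s \<in> {0..1} \<Longrightarrow> s' \<in> {0..1} \<Longrightarrow> \<bar>I s' x - I s x\<bar> \<le> L * \<bar>s' - s\<bar>"
  using field_differentiable_bound[of "{0..1}" "\<lambda>s. I s x" "\<lambda>s. F1 s (y s x)" L s' s] I_der_s bF1
  by auto

lemma cont_yswap: "continuous_on (UNIV \<times> {0..s}) (\<lambda>(x, t). y t x)" if "s \<le> 1" for s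
proof -
  have "continuous_on (UNIV \<times> {0..s}) ((\<lambda>p. y (fst p) (snd p)) \<circ> (\<lambda>(x,t). (t,x)))"
    apply (rule continuous_on_compose)
     apply (auto intro!: continuous_intros simp: split_beta)[1]
    apply (rule continuous_on_subset[OF y_cont])
    using that by (auto simp: SS_def)
  then show ?thesis by (simp add: o_def split_beta)
qed

lemma I_cont_x: "s \<in> {0..1} \<Longrightarrow> continuous_on UNIV (\<lambda>x. I s x)"
proof -
  assume s: "s \<in> {0..1}"
  have "continuous_on (UNIV \<times> {0..s}) (\<lambda>p. F1 (snd p) ((\<lambda>(x, t). y t x) p))"
    by (rule cont_comp2[OF cF1]) (use s in \<open>auto intro: continuous_intros cont_yswap\<close>)
  then have "continuous_on (UNIV \<times> cbox 0 s) (\<lambda>(x, t). F1 t (y t x))"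
    by (simp add: split_beta cbox_interval)
  from integral_continuous_on_param[OF this] show ?thesis
    by (simp add: I_def cbox_interval)
qed

lemma I_cont: "continuous_on SS (\<lambda>p. I (fst p) (snd p))"
  by (rule joint_cont[of L]) (auto simp: LKM I_lip_s I_cont_x)

lemma q_cont: "continuous_on SS (\<lambda>p. q (fst p) (snd p))"
  unfolding q_def using I_cont by (intro continuous_intros)

lemma cont_q_swap: "continuous_on (UNIV \<times> {0..s}) (\<lambda>(x, t). q t x)" if "s \<le> 1" for s
proof -
  have "continuous_on (UNIV \<times> {0..s}) ((\<lambda>p. q (fst p) (snd p)) \<circ> (\<lambda>(x,t). (t,x)))"
    apply (rule continuous_on_compose)
     apply (auto intro!: continuous_intros simp: split_beta)[1]
    apply (rule continuous_on_subset[OF q_cont])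
    using that by (auto simp: SS_def)
  then show ?thesis by (simp add: o_def split_beta)
qed

lemma cont_G: "continuous_on (UNIV \<times> {0..s}) (\<lambda>(x, t). F2 t (y t x) * q t x)" if "s \<le> 1" for s
proof -
  have "continuous_on (UNIV \<times> {0..s}) (\<lambda>p. F2 (snd p) ((\<lambda>(x, t). y t x) p))"
    by (rule cont_comp2[OF cF2]) (auto intro: continuous_intros cont_yswap that)
  then show ?thesis using cont_q_swap[OF that]
    by (auto intro!: continuous_intros simp: split_beta)
qed

lemma I_der_x:
  assumes s: "s \<in> {0..1}"
  shows "((\<lambda>x. I s x) has_real_derivative J s x) (at x)"
proof -
  have "((\<lambda>x. integral (cbox 0 s) (\<lambda>t. F1 t (y t x))) has_field_derivative
          integral (cbox 0 s) (\<lambda>t. F2 t (y t x) * q t x)) (at x within UNIV)"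
  proof (rule leibniz_rule_field_derivative[where fx="\<lambda>x t. F2 t (y t x) * q t x"])
    fix x' t assume "x' \<in> (UNIV::real set)" "t \<in> cbox 0 s"
    hence t: "t \<in> {0..1}" using s by auto
    show "((\<lambda>x. F1 t (y t x)) has_field_derivative F2 t (y t x') * q t x') (at x' within UNIV)"
      by (rule DERIV_chain2[OF dF1 y_der_x[OF t]])
  next
    fix x' :: real
    show "(\<lambda>t. F1 t (y t x')) integrable_on cbox 0 s"
      unfolding cbox_interval using s
      by (intro integrable_continuous_interval continuous_on_subset[OF cont_F1y]) auto
  next
    show "continuous_on (UNIV \<times> cbox 0 s) (\<lambda>(x, t). F2 t (y t x) * q t x)"
      unfolding cbox_interval using cont_G s by auto
  qed auto
  then show ?thesis by (simp add: I_def J_def cbox_interval)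
qed

lemma q_der_x: "s \<in> {0..1} \<Longrightarrow> ((\<lambda>x. q s x) has_real_derivative q s x * J s x) (at x)"
  unfolding q_def by (auto intro!: derivative_eq_intros I_der_x)

lemma cont_Gs: "continuous_on {0..1} (\<lambda>t. F2 t (y t x) * q t x)"
proof -
  have G: "continuous_on (UNIV \<times> {0..1}) (\<lambda>(x, t). F2 t (y t x) * q t x)" by (rule cont_G) simp
  have c: "continuous_on {0..1} (\<lambda>t. (x,t))" by (intro continuous_intros)
  have "continuous_on {0..1} ((\<lambda>(x, t). F2 t (y t x) * q t x) \<circ> (\<lambda>t. (x,t)))"
    by (rule continuous_on_compose[OF c], rule continuous_on_subset[OF G]) auto
  then show ?thesis by (simp add: o_def)
qed

lemma J_der_s: "s \<in> {0..1} \<Longrightarrow> ((\<lambda>s. J s x) has_real_derivative F2 s (y s x) * q s x) (at s within {0..1})"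
  unfolding J_def by (rule integral_has_real_derivative[OF cont_Gs])

lemma J_lip_s: "s \<in> {0..1} \<Longrightarrow> s' \<in> {0..1} \<Longrightarrow> \<bar>J s' x - J s x\<bar> \<le> (K * exp L) * \<bar>s' - s\<bar>"
proof -
  assume s: "s \<in> {0..1}" and s': "s' \<in> {0..1}"
  have b: "norm (F2 t (y t x) * q t x) \<le> K * exp L" if "t \<in> {0..1}" for t
    using bF2[OF that] q_bound[OF that] LKM by (simp add: abs_mult mult_mono)
  show ?thesis
    using field_differentiable_bound[of "{0..1}" "\<lambda>s. J s x" "\<lambda>s. F2 s (y s x) * q s x" "K * exp L" s' s] J_der_s b s s'
    by auto
qed

lemma J_cont_x: "s \<in> {0..1} \<Longrightarrow> continuous_on UNIV (\<lambda>x. J s x)"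
  unfolding J_def
  by (rule integral_continuous_on_param[of UNIV 0 s "\<lambda>x t. F2 t (y t x) * q t x", unfolded cbox_interval])
     (use cont_G in auto)

lemma J_cont: "continuous_on SS (\<lambda>p. J (fst p) (snd p))"
  by (rule joint_cont[of "K * exp L"]) (auto simp: LKM J_lip_s J_cont_x)

lemma cfst: "continuous_on S fst"
  using continuous_on_fst[OF continuous_on_id] by simp

abbreviation "Y \<equiv> (\<lambda>p. y (fst p) (snd p))"
abbreviation "D1 \<equiv> (\<lambda>p. F (fst p) (y (fst p) (snd p)))"
abbreviation "Q \<equiv> (\<lambda>p. q (fst p) (snd p))"

lemma D1_cont: "continuous_on SS D1"
  by (rule cont_comp2[OF cF]) (auto intro: continuous_intros y_cont)

lemma C1S_y: "C1S SS Y D1 Q"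
  by (rule C1S_partials) (auto intro: y_der y_der_x D1_cont q_cont)

lemma C1S_q: "C1S SS Q (\<lambda>p. F1 (fst p) (Y p) * Q p) (\<lambda>p. Q p * J (fst p) (snd p))"
proof (rule C1S_partials)
  show "continuous_on SS (\<lambda>p. F1 (fst p) (Y p) * Q p)"
    using cont_comp2[OF cF1 cfst y_cont] y_cont q_cont by (auto intro!: continuous_intros)
  show "continuous_on SS (\<lambda>p. Q p * J (fst p) (snd p))"
    using q_cont J_cont by (auto intro!: continuous_intros)
qed (auto intro: q_der_s q_der_x)

lemma C1S_D1: "C1S SS D1 (\<lambda>p. Fs (fst p) (Y p) + F1 (fst p) (Y p) * D1 p) (\<lambda>p. F1 (fst p) (Y p) * Q p)"
proof -
  have "(D1 has_derivative (\<lambda>h. (Fs (fst p) (Y p) + F1 (fst p) (Y p) * D1 p) * fst h + (F1 (fst p) (Y p) * Q p) * snd h)) (at p within SS)"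
    if p: "p \<in> SS" for p
  proof -
    have dY: "(Y has_derivative (\<lambda>h. D1 p * fst h + Q p * snd h)) (at p within SS)"
      using C1S_y p unfolding C1S_def by blast
    have inner: "((\<lambda>p. (fst p, Y p)) has_derivative (\<lambda>h. (fst h, D1 p * fst h + Q p * snd h))) (at p within SS)"
      by (rule has_derivative_Pair[OF has_derivative_fst[OF has_derivative_ident] dY])
    show ?thesis
      using has_derivative_compose[OF inner dF[of "fst p" "Y p"]]
      by (simp add: algebra_simps)
  qed
  moreover have "continuous_on SS (\<lambda>p. Fs (fst p) (Y p) + F1 (fst p) (Y p) * D1 p)"
    using cont_comp2[OF cFs cfst y_cont] cont_comp2[OF cF1 cfst y_cont] y_cont D1_cont
    by (auto intro!: continuous_intros)
  moreover have "continuous_on SS (\<lambda>p. F1 (fst p) (Y p) * Q p)"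
    using cont_comp2[OF cF1 cfst y_cont] y_cont q_cont by (auto intro!: continuous_intros)
  ultimately show ?thesis unfolding C1S_def by blast
qed

lemma C2_y: "C2_on Y SS"
  by (rule C2_from_C1S[OF C1S_y C1S_D1 C1S_q])

end


lemma deriv_glue:
  fixes f g h :: "real \<Rightarrow> real"
  assumes dg: "(g has_real_derivative D) (at x)" and dh: "(h has_real_derivative D) (at x)"
    and l: "\<And>t. x - \<delta> < t \<Longrightarrow> t < x \<Longrightarrow> f t = g t"
    and r: "\<And>t. x < t \<Longrightarrow> t < x + \<delta> \<Longrightarrow> f t = h t"
    and \<delta>: "\<delta> > 0" and fg: "f x = g x" and fh: "f x = h x"
  shows "(f has_real_derivative D) (at x)"
  unfolding has_field_derivative_def has_derivative_within_alt
proof (intro conjI allI impI)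
  show "bounded_linear ((*) D)" by (rule bounded_linear_mult_right)
  fix e :: real assume e: "e > 0"
  obtain d1 where d1: "d1 > 0" "\<And>t. norm (t - x) < d1 \<Longrightarrow> norm (g t - g x - D * (t - x)) \<le> e * norm (t - x)"
    using dg e unfolding has_field_derivative_def has_derivative_within_alt by (metis UNIV_I)
  obtain d2 where d2: "d2 > 0" "\<And>t. norm (t - x) < d2 \<Longrightarrow> norm (h t - h x - D * (t - x)) \<le> e * norm (t - x)"
    using dh e unfolding has_field_derivative_def has_derivative_within_alt by (metis UNIV_I)
  show "\<exists>d>0. \<forall>y\<in>UNIV. norm (y - x) < d \<longrightarrow> norm (f y - f x - D * (y - x)) \<le> e * norm (y - x)"
  proof (intro exI[of _ "min \<delta> (min d1 d2)"] conjI ballI impI)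
    show "min \<delta> (min d1 d2) > 0" using d1 d2 \<delta> by simp
    fix t :: real assume "t \<in> UNIV" and n: "norm (t - x) < min \<delta> (min d1 d2)"
    consider "t < x" | "t = x" | "t > x" by linarith
    then show "norm (f t - f x - D * (t - x)) \<le> e * norm (t - x)"
    proof cases
      case 1 then show ?thesis using l[of t] fg d1(2)[of t] n by auto
    next
      case 2 then show ?thesis by simp
    next
      case 3 then show ?thesis using r[of t] fh d2(2)[of t] n by auto
    qed
  qed
qed

lemma piece_deriv:
  fixes P :: "real poly"
  assumes ab: "a < b" and P: "poly P a = 0" "poly P b = 0" "poly (pderiv P) a = 0" "poly (pderiv P) b = 0"
  shows "((\<lambda>t. if t \<in> {a..b} then poly P t else 0) has_real_derivative (if y \<in> {a..b} then poly (pderiv P) y else 0)) (at y)"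
proof -
  consider "y < a" | "y = a" | "a < y \<and> y < b" | "y = b" | "y > b" by linarith
  then show ?thesis
  proof cases
    case 1
    show ?thesis
      by (rule has_field_derivative_transform_within_open[of "\<lambda>t. 0" _ _ "{..<a}"]) (use 1 in auto)
  next
    case 3
    show ?thesis
      by (rule has_field_derivative_transform_within_open[of "\<lambda>t. poly P t" _ _ "{a<..<b}"]) (use 3 in auto)
  next
    case 5
    show ?thesis
      by (rule has_field_derivative_transform_within_open[of "\<lambda>t. 0" _ _ "{b<..}"]) (use 5 in auto)
  next
    case 2
    show ?thesis
      by (rule deriv_glue[of "\<lambda>t. 0" _ _ "\<lambda>t. poly P t" "b - a"]) (use 2 ab P poly_DERIV[of P a] in auto)
  next
    case 4
    show ?thesis
      by (rule deriv_glue[of "\<lambda>t. poly P t" _ _ "\<lambda>t. 0" "b - a"]) (use 4 ab P poly_DERIV[of P b] in auto)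
  qed
qed

lemma piece_clamp:
  fixes P :: "real poly"
  assumes ab: "a < b" and P: "poly P a = 0" "poly P b = 0"
  shows "(if t \<in> {a..b} then poly P t else 0) = poly P (max a (min b t))"
  using ab P by (auto simp: max_def min_def)

lemma piece_cont:
  fixes P :: "real poly"
  assumes ab: "a < b" and P: "poly P a = 0" "poly P b = 0"
  shows "continuous_on UNIV (\<lambda>t. if t \<in> {a..b} then poly P t else 0)"
proof -
  have "continuous_on UNIV (\<lambda>t. poly P (max a (min b t)))" by (intro continuous_intros)
  then show ?thesis by (subst piece_clamp[OF assms, abs_def])
qed


definition psi :: "real \<Rightarrow> real" where "psi A = A / (1 + A\<^sup>2)"
definition psi1 :: "real \<Rightarrow> real" where "psi1 A = (1 - A\<^sup>2) / (1 + A\<^sup>2)\<^sup>2"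
definition psi2 :: "real \<Rightarrow> real" where "psi2 A = (2 * A^3 - 6 * A) / (1 + A\<^sup>2)^3"

lemma onepA: "1 + A\<^sup>2 \<noteq> (0::real)" by (metis power2_less_0 add_eq_0_iff le_minus_one_simps(3) not_less zero_le_power2)
lemma onepA': "1 + A * A \<noteq> (0::real)" using onepA[of A] by (simp add: power2_eq_square)

lemma psi_der: "(psi has_real_derivative psi1 A) (at A)"
  unfolding psi_def[abs_def] psi1_def
  apply (rule derivative_eq_intros refl | simp add: onepA)+
  apply (simp add: field_simps onepA power2_eq_square)
  done

lemma psi1_der: "(psi1 has_real_derivative psi2 A) (at A)"
  unfolding psi1_def[abs_def] psi2_def
  apply (rule derivative_eq_intros refl | simp add: onepA)+
  apply (simp add: divide_simps onepA onepA')
  apply algebra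
  done

lemma psi_cont: "continuous_on UNIV psi"
  by (rule DERIV_continuous_on) (rule has_field_derivative_at_within[OF psi_der])
lemma psi1_cont: "continuous_on UNIV psi1"
  by (rule DERIV_continuous_on) (rule has_field_derivative_at_within[OF psi1_der])
lemma psi2_cont: "continuous_on UNIV psi2"
  unfolding psi2_def[abs_def] by (intro continuous_intros) (simp add: onepA)

lemma bounded_supp:
  fixes G :: "real \<Rightarrow> real \<Rightarrow> real"
  assumes c: "continuous_on UNIV (\<lambda>p. G (fst p) (snd p))" and z: "\<And>s v. v \<notin> {a..b} \<Longrightarrow> G s v = 0"
  shows "\<exists>M\<ge>0. \<forall>s\<in>{0..1}. \<forall>v. \<bar>G s v\<bar> \<le> M"
proof -
  have "compact ((\<lambda>p. G (fst p) (snd p)) ` ({0..1::real} \<times> {a..b}))"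
    by (rule compact_continuous_image[OF continuous_on_subset[OF c]]) (auto intro: compact_Times)
  then obtain B where B: "\<And>z. z \<in> (\<lambda>p. G (fst p) (snd p)) ` ({0..1::real} \<times> {a..b}) \<Longrightarrow> norm z \<le> B"
    using compact_imp_bounded bounded_iff by metis
  show ?thesis
  proof (intro exI[of _ "max B 0"] conjI ballI allI)
    fix s v assume s: "s \<in> {0..(1::real)}"
    show "\<bar>G s v\<bar> \<le> max B 0"
    proof (cases "v \<in> {a..b}")
      case True
      then have "norm (G s v) \<le> B" using B[of "G s v"] s by force
      then show ?thesis by simp
    qed (simp add: z)
  qed simp
qed

locale conc =
  fixes w :: "real \<Rightarrow> real" and a b :: real and p :: "real poly" and \<phi> :: "real \<Rightarrow> real"
  assumes w_C3: "Ck_real 3 w" and ab: "a < b"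
    and phi_def: "\<forall>x. \<phi> x = (if x \<in> {a..b} then poly p x else 0)"
    and phi_bd: "\<forall>k\<le>3. poly ((pderiv ^^ k) p) a = 0 \<and> poly ((pderiv ^^ k) p) b = 0"
begin

definition ph :: "nat \<Rightarrow> real \<Rightarrow> real" where "ph k t = (if t \<in> {a..b} then poly ((pderiv ^^ k) p) t else 0)"
definition "w1 = deriv w"
definition "w2 = deriv w1"
definition "w3 = deriv w2"

lemma ph_zero: "t \<notin> {a..b} \<Longrightarrow> ph k t = 0" by (auto simp: ph_def)

lemma ph_der: "k \<le> 2 \<Longrightarrow> (ph k has_real_derivative ph (Suc k) t) (at t)"
proof -
  assume k: "k \<le> 2"
  have h: "poly ((pderiv ^^ k) p) a = 0" "poly ((pderiv ^^ k) p) b = 0"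
    "poly (pderiv ((pderiv ^^ k) p)) a = 0" "poly (pderiv ((pderiv ^^ k) p)) b = 0"
    using phi_bd k spec[OF phi_bd, of "Suc k"] by auto
  have e: "ph k = (\<lambda>t. if t \<in> {a..b} then poly ((pderiv ^^ k) p) t else 0)" by (intro ext) (simp only: ph_def)
  have e2: "ph (Suc k) t = (if t \<in> {a..b} then poly (pderiv ((pderiv ^^ k) p)) t else 0)"
    by (simp only: ph_def funpow.simps o_apply)
  show ?thesis unfolding e e2 by (rule piece_deriv[OF ab h, of t])
qed

lemma ph_cont: "k \<le> 3 \<Longrightarrow> continuous_on UNIV (ph k)"
proof -
  assume k: "k \<le> 3"
  have h: "poly ((pderiv ^^ k) p) a = 0" "poly ((pderiv ^^ k) p) b = 0" using phi_bd k by auto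
  have e: "ph k = (\<lambda>t. if t \<in> {a..b} then poly ((pderiv ^^ k) p) t else 0)" by (intro ext) (simp only: ph_def)
  show ?thesis unfolding e by (rule piece_cont[OF ab h])
qed

lemma ph0_der: "(ph 0 has_real_derivative ph 1 t) (at t)" using ph_der[of 0] by simp
lemma ph1_der: "(ph 1 has_real_derivative ph 2 t) (at t)" using ph_der[of 1] by (simp add: numeral_2_eq_2)
lemma ph2_der: "(ph 2 has_real_derivative ph 3 t) (at t)" using ph_der[of 2] by (simp add: numeral_3_eq_3 numeral_2_eq_2)

lemma phi_ph: "\<phi> = ph 0" using phi_def by (auto simp: ph_def fun_eq_iff)

lemma deriv_phi: "deriv \<phi> t = ph 1 t"
  using ph_der[of 0 t] by (simp add: phi_ph DERIV_imp_deriv)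

lemma w_facts: "\<And>j x. j < 3 \<Longrightarrow> ((deriv ^^ j) w) differentiable (at x)" "continuous_on UNIV ((deriv ^^ 3) w)"
  using w_C3 unfolding Ck_real_def by auto

lemma w_der: "(w has_real_derivative w1 t) (at t)"
  using w_facts(1)[of 0 t] by (simp add: w1_def DERIV_deriv_iff_real_differentiable)
lemma w1_der: "(w1 has_real_derivative w2 t) (at t)"
  using w_facts(1)[of 1 t] by (simp add: w1_def w2_def DERIV_deriv_iff_real_differentiable)
lemma w2_der: "(w2 has_real_derivative w3 t) (at t)"
  using w_facts(1)[of 2 t] by (simp add: w1_def w2_def w3_def DERIV_deriv_iff_real_differentiable numeral_2_eq_2)
lemma w3_cont: "continuous_on UNIV w3"
  using w_facts(2) by (simp add: w1_def w2_def w3_def numeral_3_eq_3)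
lemma w_cont: "continuous_on UNIV w"
  by (rule DERIV_continuous_on) (rule has_field_derivative_at_within[OF w_der])
lemma w1_cont: "continuous_on UNIV w1"
  by (rule DERIV_continuous_on) (rule has_field_derivative_at_within[OF w1_der])
lemma w2_cont: "continuous_on UNIV w2"
  by (rule DERIV_continuous_on) (rule has_field_derivative_at_within[OF w2_der])

lemma ci_ph: "k \<le> 3 \<Longrightarrow> continuous_on S g \<Longrightarrow> continuous_on S (\<lambda>x. ph k (g x))"
  using continuous_on_compose2[OF ph_cont] by blast
lemma ci_w1: "continuous_on S g \<Longrightarrow> continuous_on S (\<lambda>x. w1 (g x))"
  using continuous_on_compose2[OF w1_cont] by blast
lemma ci_w2: "continuous_on S g \<Longrightarrow> continuous_on S (\<lambda>x. w2 (g x))"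
  using continuous_on_compose2[OF w2_cont] by blast
lemma ci_w3: "continuous_on S g \<Longrightarrow> continuous_on S (\<lambda>x. w3 (g x))"
  using continuous_on_compose2[OF w3_cont] by blast
lemma ci_psi: "continuous_on S g \<Longrightarrow> continuous_on S (\<lambda>x. psi (g x))"
  using continuous_on_compose2[OF psi_cont] by blast
lemma ci_psi1: "continuous_on S g \<Longrightarrow> continuous_on S (\<lambda>x. psi1 (g x))"
  using continuous_on_compose2[OF psi1_cont] by blast
lemma ci_psi2: "continuous_on S g \<Longrightarrow> continuous_on S (\<lambda>x. psi2 (g x))"
  using continuous_on_compose2[OF psi2_cont] by blast

lemmas ci = ci_ph ci_w1 ci_w2 ci_w3 ci_psi ci_psi1 ci_psi2

definition "AA s v = w1 v + s * ph 1 v"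
definition "AAv s v = w2 v + s * ph 2 v"
definition "AAvv s v = w3 v + s * ph 3 v"
definition "FF s v = - (ph 0 v * psi (AA s v))"
definition "FF1 s v = - (ph 1 v * psi (AA s v) + ph 0 v * (psi1 (AA s v) * AAv s v))"
definition "FF2 s v = - (ph 2 v * psi (AA s v) + ph 1 v * (psi1 (AA s v) * AAv s v)
   + (ph 1 v * (psi1 (AA s v) * AAv s v) + ph 0 v * (psi2 (AA s v) * AAv s v * AAv s v + psi1 (AA s v) * AAvv s v)))"
definition "FFs s v = - (ph 0 v * (psi1 (AA s v) * ph 1 v))"

lemma dFF: "((\<lambda>p. FF (fst p) (snd p)) has_derivative (\<lambda>h. FFs s v * fst h + FF1 s v * snd h)) (at (s,v))"
  unfolding FF_def[abs_def] AA_def FFs_def FF1_def AAv_def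
  apply (rule has_derivative_eq_rhs)
   apply (rule derivative_eq_intros DERIV_compose_FDERIV[OF ph0_der] DERIV_compose_FDERIV[OF ph1_der] DERIV_compose_FDERIV[OF w_der]
        DERIV_compose_FDERIV[OF w1_der] DERIV_compose_FDERIV[OF psi_der] refl | simp)+
  apply (simp add: fun_eq_iff algebra_simps)
  done

end


context conc
begin

lemma dFF1: "((\<lambda>v. FF1 s v) has_real_derivative FF2 s v) (at v)"
  unfolding FF1_def[abs_def] FF2_def AA_def AAv_def AAvv_def
  apply (rule DERIV_cong)
   apply (rule derivative_eq_intros DERIV_chain2[OF ph0_der] DERIV_chain2[OF ph1_der] DERIV_chain2[OF ph2_der]
      DERIV_chain2[OF w1_der] DERIV_chain2[OF w2_der] DERIV_chain2[OF psi_der] DERIV_chain2[OF psi1_der] refl | simp)+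
  apply (simp add: algebra_simps)
  done

lemma cfst': "continuous_on UNIV (fst :: real \<times> real \<Rightarrow> real)" by (intro continuous_intros)
lemma csnd': "continuous_on UNIV (snd :: real \<times> real \<Rightarrow> real)" by (intro continuous_intros)

lemma cAA: "continuous_on UNIV (\<lambda>p::real\<times>real. AA (fst p) (snd p))"
  unfolding AA_def by (intro continuous_intros ci csnd') auto
lemma cAAv: "continuous_on UNIV (\<lambda>p::real\<times>real. AAv (fst p) (snd p))"
  unfolding AAv_def by (intro continuous_intros ci csnd') auto
lemma cAAvv: "continuous_on UNIV (\<lambda>p::real\<times>real. AAvv (fst p) (snd p))"
  unfolding AAvv_def by (intro continuous_intros ci csnd') auto

lemma cFF: "continuous_on UNIV (\<lambda>p::real\<times>real. FF (fst p) (snd p))"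
  unfolding FF_def by (intro continuous_intros ci csnd' cAA) auto
lemma cFF1: "continuous_on UNIV (\<lambda>p::real\<times>real. FF1 (fst p) (snd p))"
  unfolding FF1_def by (intro continuous_intros ci csnd' cAA cAAv) auto
lemma cFF2: "continuous_on UNIV (\<lambda>p::real\<times>real. FF2 (fst p) (snd p))"
  unfolding FF2_def by (intro continuous_intros ci csnd' cAA cAAv cAAvv) auto
lemma cFFs: "continuous_on UNIV (\<lambda>p::real\<times>real. FFs (fst p) (snd p))"
  unfolding FFs_def by (intro continuous_intros ci csnd' cAA) auto

lemma FF_zero: "v \<notin> {a..b} \<Longrightarrow> FF s v = 0" "v \<notin> {a..b} \<Longrightarrow> FF1 s v = 0" "v \<notin> {a..b} \<Longrightarrow> FF2 s v = 0"
  by (simp_all add: FF_def FF1_def FF2_def ph_zero)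

lemma flow_inst:
  assumes y_der: "\<And>s x. s \<in> {0..1} \<Longrightarrow> ((\<lambda>s. y s x) has_real_derivative FF s (y s x)) (at s within {0..1})"
    and y0: "\<And>x. y 0 x = x"
  shows "\<exists>L K M. flow FF FF1 FF2 FFs y L K M"
proof -
  obtain M where M: "M \<ge> 0" "\<forall>s\<in>{0..1}. \<forall>v. \<bar>FF s v\<bar> \<le> M"
    using bounded_supp[OF cFF FF_zero(1)] by blast
  obtain L where L: "L \<ge> 0" "\<forall>s\<in>{0..1}. \<forall>v. \<bar>FF1 s v\<bar> \<le> L"
    using bounded_supp[OF cFF1 FF_zero(2)] by blast
  obtain K where K: "K \<ge> 0" "\<forall>s\<in>{0..1}. \<forall>v. \<bar>FF2 s v\<bar> \<le> K"
    using bounded_supp[OF cFF2 FF_zero(3)] by blast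
  have "flow FF FF1 FF2 FFs y L K M"
    by (unfold_locales) (use dFF dFF1 cFF cFF1 cFF2 cFFs M L K y_der y0 in auto)
  then show ?thesis by blast
qed

end


locale dyn = conc w a b p \<phi> for w a b p \<phi> +
  fixes \<xi> \<eta> :: "real \<Rightarrow> real \<Rightarrow> real"
  assumes sol_xi: "\<forall>x t. ((\<lambda>\<tau>. \<xi> \<tau> x) has_real_derivative
                 (- deriv w (\<xi> t x) * \<phi> (\<xi> t x) - (\<eta> t x - w (\<xi> t x)) * deriv \<phi> (\<xi> t x))) (at t)"
    and sol_eta: "\<forall>x t. ((\<lambda>\<tau>. \<eta> \<tau> x) has_real_derivative \<phi> (\<xi> t x)) (at t)"
    and init: "\<forall>x. \<xi> 0 x = x \<and> \<eta> 0 x = w x"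
begin

abbreviation "ft \<equiv> first_time \<xi> \<eta> w \<phi>"

lemma ft_eq:
  assumes "t0 \<ge> 0" "\<eta> t0 x = w (\<xi> t0 x) + s * \<phi> (\<xi> t0 x)"
    and "\<And>t. 0 \<le> t \<Longrightarrow> t < t0 \<Longrightarrow> \<eta> t x \<noteq> w (\<xi> t x) + s * \<phi> (\<xi> t x)"
  shows "ft s x = t0"
  unfolding first_time_def
  by (rule cInf_eq_minimum) (use assms in \<open>auto simp: not_less[symmetric]\<close>)

lemma ft_zero: "\<phi> x = 0 \<or> s = 0 \<Longrightarrow> ft s x = 0"
  by (rule ft_eq) (use init in auto)

lemma X_der: "((\<lambda>t. \<xi> t x) has_real_derivative
     (- (w1 (\<xi> t x) * ph 0 (\<xi> t x)) - (\<eta> t x - w (\<xi> t x)) * ph 1 (\<xi> t x))) (at t)"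
  using sol_xi[rule_format, of x t] unfolding deriv_phi unfolding w1_def[symmetric] phi_ph by simp

lemma E_der: "((\<lambda>t. \<eta> t x) has_real_derivative ph 0 (\<xi> t x)) (at t)"
  using sol_eta[rule_format, of x t] by (simp add: phi_ph)

lemma X_cont: "continuous_on UNIV (\<lambda>t. \<xi> t x)"
  by (rule DERIV_continuous_on) (rule has_field_derivative_at_within[OF X_der])
lemma E_cont: "continuous_on UNIV (\<lambda>t. \<eta> t x)"
  by (rule DERIV_continuous_on) (rule has_field_derivative_at_within[OF E_der])

end


lemma bound01: "continuous_on {0..1} (f :: real \<Rightarrow> real) \<Longrightarrow> \<exists>B\<ge>0. \<forall>t\<in>{0..1}. \<bar>f t\<bar> \<le> B"
proof -
  assume c: "continuous_on {0..1} f"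
  have "compact (f ` {0..1})" by (rule compact_continuous_image[OF c compact_Icc])
  then obtain B where "\<And>z. z \<in> f ` {0..1} \<Longrightarrow> norm z \<le> B" using compact_imp_bounded bounded_iff by metis
  then show ?thesis by (intro exI[of _ "max B 0"]) force
qed

context dyn
begin

definition "PP x t = ph 0 (\<xi> t x)"
definition "rr x t = \<eta> t x - w (\<xi> t x)"
definition "uu x t = rr x t / PP x t"
definition "XD x t = - (w1 (\<xi> t x) * PP x t) - rr x t * ph 1 (\<xi> t x)"

lemma X_der': "((\<lambda>t. \<xi> t x) has_real_derivative XD x t) (at t)"
  using X_der[of x t] by (simp add: XD_def PP_def rr_def)

lemma PP_der: "(PP x has_real_derivative ph 1 (\<xi> t x) * XD x t) (at t)"
  unfolding PP_def[abs_def] by (rule DERIV_chain2[OF ph0_der X_der'])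

lemma rr_der: "(rr x has_real_derivative PP x t - w1 (\<xi> t x) * XD x t) (at t)"
  unfolding rr_def[abs_def]
  by (rule derivative_eq_intros E_der DERIV_chain2[OF w_der X_der'] refl | simp add: PP_def)+

lemma uu_der:
  assumes nz: "PP x t \<noteq> 0"
  shows "(uu x has_real_derivative 1 + (w1 (\<xi> t x) + uu x t * ph 1 (\<xi> t x))\<^sup>2) (at t)"
proof -
  have "(uu x has_real_derivative ((PP x t - w1 (\<xi> t x) * XD x t) * PP x t - rr x t * (ph 1 (\<xi> t x) * XD x t)) / (PP x t * PP x t)) (at t)"
    unfolding uu_def[abs_def] using DERIV_divide[OF rr_der PP_der nz] by simp
  moreover have "((PP x t - w1 (\<xi> t x) * XD x t) * PP x t - rr x t * (ph 1 (\<xi> t x) * XD x t)) / (PP x t * PP x t)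
      = 1 + (w1 (\<xi> t x) + uu x t * ph 1 (\<xi> t x))\<^sup>2"
    using nz unfolding uu_def XD_def by (simp add: field_simps power2_eq_square)
  ultimately show ?thesis by simp
qed

lemma PP_cont: "continuous_on S (PP x)"
  by (rule DERIV_continuous_on) (rule has_field_derivative_at_within[OF PP_der])
lemma rr_cont: "continuous_on S (rr x)"
  by (rule DERIV_continuous_on) (rule has_field_derivative_at_within[OF rr_der])
lemma uu_cont: "(\<And>t. t \<in> S \<Longrightarrow> PP x t \<noteq> 0) \<Longrightarrow> continuous_on S (uu x)"
  unfolding uu_def[abs_def] by (intro continuous_intros PP_cont rr_cont) auto

lemma PP0: "PP x 0 = \<phi> x" using init by (simp add: PP_def phi_ph)
lemma rr0: "rr x 0 = 0" using init by (simp add: rr_def)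
lemma uu0: "uu x 0 = 0" by (simp add: uu_def rr0)

lemma rr_uu: "PP x t \<noteq> 0 \<Longrightarrow> rr x t = uu x t * PP x t" by (simp add: uu_def)

lemma uu_ge:
  assumes "0 \<le> t" and nz: "\<And>\<tau>. 0 \<le> \<tau> \<Longrightarrow> \<tau> \<le> t \<Longrightarrow> PP x \<tau> \<noteq> 0"
  shows "uu x t \<ge> t"
proof -
  have "(\<lambda>\<tau>. uu x \<tau> - \<tau>) 0 \<le> (\<lambda>\<tau>. uu x \<tau> - \<tau>) t"
  proof (rule DERIV_nonneg_imp_nondecreasing[OF assms(1)])
    fix \<tau> assume "0 \<le> \<tau>" "\<tau> \<le> t"
    then have "PP x \<tau> \<noteq> 0" using nz by auto
    then have "((\<lambda>\<tau>. uu x \<tau> - \<tau>) has_real_derivative (1 + (w1 (\<xi> \<tau> x) + uu x \<tau> * ph 1 (\<xi> \<tau> x))\<^sup>2) - 1) (at \<tau>)"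
      by (intro derivative_intros uu_der)
    then show "\<exists>y. ((\<lambda>\<tau>. uu x \<tau> - \<tau>) has_real_derivative y) (at \<tau>) \<and> 0 \<le> y"
      by (intro exI conjI) auto
  qed
  then show ?thesis by (simp add: uu0)
qed

end


context dyn
begin

lemma exists_T:
  assumes nz: "\<phi> x \<noteq> 0"
  shows "\<exists>T. 0 < T \<and> T \<le> 1 \<and> (\<forall>t\<in>{0..T}. PP x t \<noteq> 0) \<and> uu x T = 1"
proof -
  define C where "C = {t\<in>{0..1}. PP x t = 0 \<or> rr x t = PP x t}"
  have Ceq: "C = {0..1} \<inter> {t. PP x t * (rr x t - PP x t) = 0}" by (auto simp: C_def)
  have closedC: "closed C" unfolding Ceq
    by (intro closed_Int closed_atLeastAtMost closed_Collect_eq continuous_intros PP_cont rr_cont)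
  have P0: "PP x 0 \<noteq> 0" using nz PP0 by simp
  have notC0: "0 \<notin> C" using P0 rr0 by (auto simp: C_def)
  have uu1: "uu x t = 1 \<Longrightarrow> PP x t \<noteq> 0 \<Longrightarrow> rr x t = PP x t" for t by (simp add: uu_def field_simps)
  have Cne: "C \<noteq> {}"
  proof
    assume Ce: "C = {}"
    have nzs: "PP x t \<noteq> 0" "rr x t \<noteq> PP x t" if "t \<in> {0..1}" for t
      using Ce that by (auto simp: C_def)
    have "uu x 1 \<ge> 1" using uu_ge[of 1 x] nzs by auto
    then obtain t where t: "0 \<le> t" "t \<le> 1" "uu x t = 1"
      using IVT'[of "uu x" 0 1 1] uu0 uu_cont[of "{0..1}" x] nzs by auto
    then show False using nzs[of t] uu1[of t] by auto
  qed
  define T where "T = Inf C"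
  have bdd: "bdd_below C" by (auto simp: C_def bdd_below_def)
  have TC: "T \<in> C" unfolding T_def by (rule closed_contains_Inf[OF Cne bdd closedC])
  have T01: "0 \<le> T" "T \<le> 1" using TC by (auto simp: C_def)
  have Tpos: "T > 0" using TC notC0 T01 by (cases "T = 0") auto
  have below: "PP x t \<noteq> 0 \<and> rr x t \<noteq> PP x t" if "0 \<le> t" "t < T" for t
  proof -
    have "t \<notin> C" using cInf_lower[OF _ bdd, of t] that unfolding T_def by force
    then show ?thesis using that T01 by (auto simp: C_def)
  qed
  have ult1: "uu x t < 1" if t: "0 \<le> t" "t < T" for t
  proof (rule ccontr)
    assume "\<not> uu x t < 1"
    then obtain t' where t': "0 \<le> t'" "t' \<le> t" "uu x t' = 1"
      using IVT'[of "uu x" 0 1 t] uu0 uu_cont[of "{0..t}" x] below t by force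
    then show False using below[of t'] uu1[of t'] t by auto
  qed
  have uge0: "uu x t \<ge> 0" if t: "0 \<le> t" "t < T" for t
    using uu_ge[of t x] below t by force
  obtain B1 where B1: "B1 \<ge> 0" "\<forall>t\<in>{0..1}. \<bar>ph 1 (\<xi> t x)\<bar> \<le> B1"
    using bound01[of "\<lambda>t. ph 1 (\<xi> t x)"] ci_ph[of 1 "{0..1}", OF _ continuous_on_subset[OF X_cont]] by auto
  obtain B2 where B2: "B2 \<ge> 0" "\<forall>t\<in>{0..1}. \<bar>w1 (\<xi> t x)\<bar> \<le> B2"
    using bound01[of "\<lambda>t. w1 (\<xi> t x)"] ci_w1[of "{0..1}", OF continuous_on_subset[OF X_cont]] by auto
  define BB where "BB = B1 * (B2 + B1)"
  define m where "m = (\<phi> x)\<^sup>2 * exp (- 2 * BB)"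
  have mpos: "m > 0" using nz by (simp add: m_def)
  have lowb: "(PP x t)\<^sup>2 \<ge> m" if t: "0 \<le> t" "t < T" for t
  proof -
    define W where "W \<tau> = (PP x \<tau>)\<^sup>2 * exp (2 * BB * \<tau>)" for \<tau>
    have "W 0 \<le> W t"
    proof (rule DERIV_nonneg_imp_nondecreasing[OF t(1)])
      fix \<tau> assume \<tau>: "0 \<le> \<tau>" "\<tau> \<le> t"
      have \<tau>T: "\<tau> < T" using \<tau> t by simp
      have \<tau>1: "\<tau> \<in> {0..1}" using \<tau>T T01 \<tau> by auto
      have nzt: "PP x \<tau> \<noteq> 0" using below \<tau> \<tau>T by auto
      have d: "(W has_real_derivative (2 * PP x \<tau> * (ph 1 (\<xi> \<tau> x) * XD x \<tau>)) * exp (2 * BB * \<tau>)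
           + (PP x \<tau>)\<^sup>2 * (exp (2 * BB * \<tau>) * (2 * BB))) (at \<tau>)"
        unfolding W_def[abs_def]
        by (rule derivative_eq_intros PP_der refl | simp)+
      define c where "c = ph 1 (\<xi> \<tau> x)"
      define v where "v = w1 (\<xi> \<tau> x)"
      have e: "(2 * PP x \<tau> * (ph 1 (\<xi> \<tau> x) * XD x \<tau>)) * exp (2 * BB * \<tau>)
           + (PP x \<tau>)\<^sup>2 * (exp (2 * BB * \<tau>) * (2 * BB))
         = 2 * exp (2 * BB * \<tau>) * (PP x \<tau>)\<^sup>2 * (BB - (c * v + uu x \<tau> * c\<^sup>2))"
        unfolding XD_def rr_uu[OF nzt] c_def v_def by (simp add: algebra_simps power2_eq_square)
      have cb: "\<bar>c\<bar> \<le> B1" "\<bar>v\<bar> \<le> B2" using B1 B2 \<tau>1 by (auto simp: c_def v_def)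
      have "c * v \<le> B1 * B2"
      proof -
        have "c * v \<le> \<bar>c\<bar> * \<bar>v\<bar>" by (metis abs_ge_self abs_mult)
        also have "\<dots> \<le> B1 * B2" using cb by (intro mult_mono) auto
        finally show ?thesis .
      qed
      moreover have "uu x \<tau> * c\<^sup>2 \<le> B1 * B1"
      proof -
        have "uu x \<tau> * c\<^sup>2 \<le> 1 * c\<^sup>2"
          using ult1[of \<tau>] \<tau> \<tau>T by (intro mult_right_mono) auto
        also have "\<dots> = \<bar>c\<bar> * \<bar>c\<bar>" by (simp add: power2_eq_square abs_mult_self_eq)
        also have "\<dots> \<le> B1 * B1" using cb by (intro mult_mono) auto
        finally show ?thesis .
      qed
      ultimately have "BB - (c * v + uu x \<tau> * c\<^sup>2) \<ge> 0" by (simp add: BB_def algebra_simps)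
      then have "2 * exp (2 * BB * \<tau>) * (PP x \<tau>)\<^sup>2 * (BB - (c * v + uu x \<tau> * c\<^sup>2)) \<ge> 0" by simp
      then show "\<exists>y. (W has_real_derivative y) (at \<tau>) \<and> 0 \<le> y" using d e by metis
    qed
    then have "(\<phi> x)\<^sup>2 \<le> (PP x t)\<^sup>2 * exp (2 * BB * t)" by (simp add: W_def PP0)
    then have "(\<phi> x)\<^sup>2 * exp (- 2 * BB * t) \<le> (PP x t)\<^sup>2"
      by (simp add: exp_minus field_simps)
    moreover have "exp (- 2 * BB) \<le> exp (- 2 * BB * t)"
      using t T01 B1 B2 by (simp add: BB_def mult_left_le)
    ultimately show ?thesis unfolding m_def
      by (meson mult_left_mono order_trans zero_le_power2)
  qed
  have "{0..<T} \<subseteq> {t. m \<le> (PP x t)\<^sup>2}" using lowb by auto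
  moreover have "closed {t. m \<le> (PP x t)\<^sup>2}"
    by (intro closed_Collect_le continuous_intros PP_cont)
  ultimately have "closure {0..<T} \<subseteq> {t. m \<le> (PP x t)\<^sup>2}" by (rule closure_minimal)
  then have allT: "m \<le> (PP x t)\<^sup>2" if "t \<in> {0..T}" for t using that Tpos by auto
  have nzT: "\<forall>t\<in>{0..T}. PP x t \<noteq> 0"
    using allT mpos by (metis not_less power_zero_numeral zero_power2)
  have "rr x T = PP x T" using TC nzT T01 by (auto simp: C_def)
  then have "uu x T = 1" using nzT T01 by (auto simp: uu_def)
  then show ?thesis using Tpos T01 nzT by blast
qed

end


context dyn
begin

lemma nz_case:
  assumes nz: "\<phi> x \<noteq> 0"
  shows "\<forall>s\<in>{0..1}. ((\<lambda>s. \<xi> (ft s x) x) has_real_derivative FF s (\<xi> (ft s x) x)) (at s within {0..1})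
            \<and> \<eta> (ft s x) x = w (\<xi> (ft s x) x) + s * \<phi> (\<xi> (ft s x) x)"
proof -
  obtain T where T: "0 < T" "T \<le> 1" "\<forall>t\<in>{0..T}. PP x t \<noteq> 0" "uu x T = 1"
    using exists_T[OF nz] by blast
  define Oset where "Oset = {t. PP x t \<noteq> 0}"
  have oO: "open Oset" unfolding Oset_def by (intro open_Collect_neq PP_cont continuous_intros)
  obtain \<delta>1 where \<delta>1: "\<delta>1 > 0" "ball 0 \<delta>1 \<subseteq> Oset"
    using oO T(1,3) open_contains_ball_eq[OF oO, of 0] by (auto simp: Oset_def)
  obtain \<delta>2 where \<delta>2: "\<delta>2 > 0" "ball T \<delta>2 \<subseteq> Oset"
    using oO T(1,3) open_contains_ball_eq[OF oO, of T] by (auto simp: Oset_def)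
  define d where "d = min \<delta>1 \<delta>2 / 2"
  have d: "d > 0" "d < \<delta>1" "d < \<delta>2" using \<delta>1 \<delta>2 by (auto simp: d_def)
  define c1 where "c1 = - d"
  define c2 where "c2 = T + d"
  have nzJ: "PP x t \<noteq> 0" if "t \<in> {c1..c2}" for t
  proof -
    consider "t < 0" | "t \<in> {0..T}" | "t > T" by force
    then show ?thesis
    proof cases
      case 1 then have "t \<in> ball 0 \<delta>1" using that d by (auto simp: c1_def dist_real_def)
      then show ?thesis using \<delta>1 by (auto simp: Oset_def)
    next
      case 2 then show ?thesis using T by auto
    next
      case 3 then have "t \<in> ball T \<delta>2" using that d by (auto simp: c2_def dist_real_def)
      then show ?thesis using \<delta>2 by (auto simp: Oset_def)
    qed
  qed
  define U' where "U' t = 1 + (w1 (\<xi> t x) + uu x t * ph 1 (\<xi> t x))\<^sup>2" for t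
  have U'pos: "U' t > 0" for t unfolding U'_def by (simp add: add_pos_nonneg)
  have du: "(uu x has_real_derivative U' t) (at t)" if "t \<in> {c1..c2}" for t
    unfolding U'_def by (rule uu_der[OF nzJ[OF that]])
  have strict: "uu x t1 < uu x t2" if "t1 \<in> {c1..c2}" "t2 \<in> {c1..c2}" "t1 < t2" for t1 t2
  proof (rule DERIV_pos_imp_increasing[OF that(3)])
    fix t assume "t1 \<le> t" "t \<le> t2"
    then have "t \<in> {c1..c2}" using that by auto
    then show "\<exists>y. (uu x has_real_derivative y) (at t) \<and> y > 0" using du U'pos by blast
  qed
  have inj: "t1 = t2" if "t1 \<in> {c1..c2}" "t2 \<in> {c1..c2}" "uu x t1 = uu x t2" for t1 t2
  proof (rule ccontr)
    assume "t1 \<noteq> t2"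
    then have "t1 < t2 \<or> t2 < t1" by linarith
    then show False using strict[of t1 t2] strict[of t2 t1] that by auto
  qed
  have ucont: "continuous_on {c1..c2} (uu x)" by (rule uu_cont) (rule nzJ)
  define Tinv where "Tinv z = (THE t. t \<in> {c1..c2} \<and> uu x t = z)" for z
  have c12: "c1 \<le> c2" using d T by (simp add: c1_def c2_def)
  have Tinv_prop: "Tinv z \<in> {c1..c2} \<and> uu x (Tinv z) = z" if z: "z \<in> {uu x c1..uu x c2}" for z
  proof -
    obtain t where t: "c1 \<le> t" "t \<le> c2" "uu x t = z" using IVT'[of "uu x" c1 z c2] z c12 ucont by auto
    have "\<exists>!t. t \<in> {c1..c2} \<and> uu x t = z"
      using t inj by (intro ex1I[of _ t]) auto
    then show ?thesis unfolding Tinv_def by (rule theI')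
  qed
  have Tinv_uu: "Tinv (uu x t) = t" if "t \<in> {c1..c2}" for t
    unfolding Tinv_def using that inj by (intro the_equality) auto
  have zero_in: "0 \<in> {c1..c2}" "T \<in> {c1..c2}" using d T by (auto simp: c1_def c2_def)
  have uc1: "uu x c1 < 0" using strict[of c1 0] zero_in d c12 uu0 by (auto simp: c1_def)
  have uc2: "uu x c2 > 1" using strict[of T c2] zero_in d c12 T by (auto simp: c2_def)
  have key: "Tinv s \<in> {0..T} \<and> uu x (Tinv s) = s \<and> ft s x = Tinv s" if s: "s \<in> {0..1}" for s
  proof -
    have sr: "s \<in> {uu x c1..uu x c2}" using s uc1 uc2 by auto
    note tp = Tinv_prop[OF sr]
    have ge0: "Tinv s \<ge> 0"
    proof (rule ccontr)
      assume "\<not> Tinv s \<ge> 0"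
      then have "uu x (Tinv s) < uu x 0" using strict[of "Tinv s" 0] tp zero_in by auto
      then show False using tp uu0 s by auto
    qed
    have leT: "Tinv s \<le> T"
    proof (rule ccontr)
      assume "\<not> Tinv s \<le> T"
      then have "uu x T < uu x (Tinv s)" using strict[of T "Tinv s"] tp zero_in by auto
      then show False using tp T s by auto
    qed
    have nz0: "PP x (Tinv s) \<noteq> 0" using T ge0 leT by auto
    have ft: "ft s x = Tinv s"
    proof (rule ft_eq)
      show "0 \<le> Tinv s" by (rule ge0)
      have "rr x (Tinv s) = s * PP x (Tinv s)" using rr_uu[OF nz0] tp by simp
      then show "\<eta> (Tinv s) x = w (\<xi> (Tinv s) x) + s * \<phi> (\<xi> (Tinv s) x)"
        by (simp add: rr_def PP_def phi_ph)
    next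
      fix t assume t: "0 \<le> t" "t < Tinv s"
      have tJ: "t \<in> {c1..c2}" "t \<in> {0..T}" using t ge0 leT c12 zero_in by auto
      have nzt: "PP x t \<noteq> 0" using T tJ by auto
      show "\<eta> t x \<noteq> w (\<xi> t x) + s * \<phi> (\<xi> t x)"
      proof
        assume "\<eta> t x = w (\<xi> t x) + s * \<phi> (\<xi> t x)"
        then have "rr x t = s * PP x t" by (simp add: rr_def PP_def phi_ph)
        then have "uu x t = s" using nzt by (simp add: uu_def)
        then show False using strict[of t "Tinv s"] tJ tp t by auto
      qed
    qed
    show ?thesis using ge0 leT tp ft by auto
  qed
  show ?thesis
  proof
    fix s :: real assume s: "s \<in> {0..1}"
    note k = key[OF s]
    have sr: "uu x c1 < s" "s < uu x c2" using s uc1 uc2 by auto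
    have TinvJ: "Tinv s \<in> {c1..c2}" using k zero_in by (auto simp: c1_def c2_def)
    have cont: "isCont Tinv s"
    proof -
      have "isCont Tinv (uu x (Tinv s))"
      proof (rule isCont_inverse_function[where d="d/2" and x="Tinv s" and g=Tinv and f="uu x"])
        show "0 < d/2" using d by simp
        fix z assume z: "\<bar>z - Tinv s\<bar> \<le> d/2"
        then have "Tinv s - d/2 \<le> z" "z \<le> Tinv s + d/2" unfolding abs_le_iff by linarith+
        then have zJ: "z \<in> {c1..c2}" using k d by (auto simp: c1_def c2_def)
        show "Tinv (uu x z) = z" by (rule Tinv_uu[OF zJ])
        show "isCont (uu x) z" by (rule DERIV_isCont[OF du[OF zJ]])
      qed
      then show ?thesis using k by simp
    qed
    have dT: "(Tinv has_real_derivative inverse (U' (Tinv s))) (at s)"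
    proof (rule DERIV_inverse_function[where f="uu x" and g=Tinv and a="uu x c1" and b="uu x c2"])
      show "uu x c1 < s" "s < uu x c2" by (rule sr(1), rule sr(2))
      show "isCont Tinv s" by (rule cont)
      show "(uu x has_real_derivative U' (Tinv s)) (at (Tinv s))" by (rule du[OF TinvJ])
      show "U' (Tinv s) \<noteq> 0" using U'pos[of "Tinv s"] by simp
      fix z assume "uu x c1 < z" "z < uu x c2"
      then show "uu x (Tinv z) = z" using Tinv_prop[of z] by auto
    qed
    have dX: "((\<lambda>s. \<xi> (Tinv s) x) has_real_derivative XD x (Tinv s) * inverse (U' (Tinv s))) (at s)"
      by (rule DERIV_chain2[OF X_der' dT])
    have nz0: "PP x (Tinv s) \<noteq> 0" using T k by auto
    have rrs: "rr x (Tinv s) = s * PP x (Tinv s)" using rr_uu[OF nz0] k by simp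
    have val: "XD x (Tinv s) * inverse (U' (Tinv s)) = FF s (\<xi> (Tinv s) x)"
    proof -
      define v where "v = \<xi> (Tinv s) x"
      define A where "A = w1 v + s * ph 1 v"
      have "XD x (Tinv s) = - (ph 0 v * A)" unfolding XD_def rrs by (simp add: PP_def v_def A_def algebra_simps)
      moreover have "U' (Tinv s) = 1 + A\<^sup>2" unfolding U'_def using k by (simp add: v_def A_def)
      moreover have "FF s v = - (ph 0 v * (A / (1 + A\<^sup>2)))" by (simp add: FF_def psi_def AA_def A_def)
      ultimately show ?thesis by (simp add: v_def divide_inverse)
    qed
    have "((\<lambda>s. \<xi> (Tinv s) x) has_real_derivative FF s (\<xi> (ft s x) x)) (at s within {0..1})"
      using has_field_derivative_at_within[OF dX] val k by simp
    moreover have eqs: "\<And>y. y \<in> {0..1} \<Longrightarrow> dist y s < 1 \<Longrightarrow> \<xi> (Tinv y) x = \<xi> (ft y x) x"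
      using key by simp
    ultimately have "((\<lambda>s. \<xi> (ft s x) x) has_real_derivative FF s (\<xi> (ft s x) x)) (at s within {0..1})"
      by (rule has_field_derivative_transform_within[OF _ zero_less_one s])
    moreover have "\<eta> (ft s x) x = w (\<xi> (ft s x) x) + s * \<phi> (\<xi> (ft s x) x)"
      using rrs k by (simp add: rr_def PP_def phi_ph)
    ultimately show "((\<lambda>s. \<xi> (ft s x) x) has_real_derivative FF s (\<xi> (ft s x) x)) (at s within {0..1})
            \<and> \<eta> (ft s x) x = w (\<xi> (ft s x) x) + s * \<phi> (\<xi> (ft s x) x)" by blast
  qed
qed

end


lemma C1S_cong_fun: "C1S S f f1 f2 \<Longrightarrow> (\<And>p. p \<in> S \<Longrightarrow> g p = f p) \<Longrightarrow> C1S S g f1 f2"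
  by (rule C1S_cong) auto

context dyn
begin

lemma g_facts:
  "\<forall>s\<in>{0..1}. ((\<lambda>s. \<xi> (ft s x) x) has_real_derivative FF s (\<xi> (ft s x) x)) (at s within {0..1})
            \<and> \<eta> (ft s x) x = w (\<xi> (ft s x) x) + s * \<phi> (\<xi> (ft s x) x)"
proof (cases "\<phi> x = 0")
  case True
  have e: "(\<lambda>s. \<xi> (ft s x) x) = (\<lambda>s. x)" using ft_zero[of x] True init by auto
  have "FF s x = 0" for s using True by (simp add: FF_def phi_ph)
  then show ?thesis using e ft_zero[of x] True init by (auto intro!: derivative_eq_intros)
next
  case False
  then show ?thesis by (rule nz_case)
qed

lemma g0: "\<xi> (ft 0 x) x = x" using ft_zero[of x 0] init by simp

lemma main:
  "C2_on (\<lambda>(s, x). \<xi> (ft s x) x) ({0..1} \<times> UNIV)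
   \<and> (\<forall>s\<in>{0..1}. \<forall>x. \<eta> (ft s x) x = w (\<xi> (ft s x) x) + s * \<phi> (\<xi> (ft s x) x))
   \<and> C2_on (\<lambda>(s, x). \<eta> (ft s x) x) ({0..1} \<times> UNIV)"
proof -
  define y where "y s x = \<xi> (ft s x) x" for s x
  obtain L K M where fl: "flow FF FF1 FF2 FFs y L K M"
    using flow_inst[of y] g_facts g0 unfolding y_def by blast
  interpret fl: flow FF FF1 FF2 FFs y L K M by (rule fl)
  have Yeq: "(\<lambda>(s, x). \<xi> (ft s x) x) = (\<lambda>p. y (fst p) (snd p))" by (auto simp: y_def fun_eq_iff)
  have c1: "C2_on (\<lambda>(s, x). \<xi> (ft s x) x) ({0..1} \<times> UNIV)"
    using fl.C2_y unfolding Yeq SS_def .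
  have c2: "\<forall>s\<in>{0..1}. \<forall>x. \<eta> (ft s x) x = w (\<xi> (ft s x) x) + s * \<phi> (\<xi> (ft s x) x)"
    using g_facts by blast
  note Cy = fl.C1S_y and CD = fl.C1S_D1 and Cq = fl.C1S_q
  have ph1c: "continuous_on UNIV (ph 1)" by (rule ph_cont) simp
  have ph2c: "continuous_on UNIV (ph 2)" by (rule ph_cont) simp
  have ph3c: "continuous_on UNIV (ph 3)" by (rule ph_cont) simp
  note hC = C1S_add[OF C1S_comp[OF w_der w1_cont Cy] C1S_mult[OF C1S_fst C1S_comp[OF ph0_der ph1c Cy]]]
  note h1C = C1S_add[OF C1S_mult[OF C1S_comp[OF w1_der w2_cont Cy] CD]
      C1S_add[OF C1S_mult[OF C1S_const[of _ 1] C1S_comp[OF ph0_der ph1c Cy]]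
        C1S_mult[OF C1S_fst C1S_mult[OF C1S_comp[OF ph1_der ph2c Cy] CD]]]]
  note h2C = C1S_add[OF C1S_mult[OF C1S_comp[OF w1_der w2_cont Cy] Cq]
      C1S_add[OF C1S_mult[OF C1S_const[of _ 0] C1S_comp[OF ph0_der ph1c Cy]]
        C1S_mult[OF C1S_fst C1S_mult[OF C1S_comp[OF ph1_der ph2c Cy] Cq]]]]
  have eqh: "\<And>p. p \<in> SS \<Longrightarrow> (\<lambda>(s, x). \<eta> (ft s x) x) p = w (y (fst p) (snd p)) + fst p * ph 0 (y (fst p) (snd p))"
    using c2 by (auto simp: SS_def y_def phi_ph)
  note hC' = C1S_cong_fun[OF hC eqh]
  have c3: "C2_on (\<lambda>(s, x). \<eta> (ft s x) x) SS"
    by (rule C2_from_C1S[OF hC' h1C h2C])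
  show ?thesis using c1 c2 c3 unfolding SS_def by blast
qed

end

theorem theorem3p5:
  fixes w :: "real \<Rightarrow> real" and a b :: real and p :: "real poly"
    and \<phi> :: "real \<Rightarrow> real" and \<xi> \<eta> :: "real \<Rightarrow> real \<Rightarrow> real"
  assumes w_C3: "Ck_real 3 w"
    and w_periodic: "\<exists>T>0. \<forall>x. w (x + T) = w x"
    and w_pos: "\<forall>x\<in>{-1..1}. w x > 0"
    and ab: "-1 < a" "a < b" "b < 1"
    and phi_def: "\<forall>x. \<phi> x = (if x \<in> {a..b} then poly p x else 0)"
    and phi_bd: "\<forall>k\<le>3. poly ((pderiv ^^ k) p) a = 0 \<and> poly ((pderiv ^^ k) p) b = 0"
    and sol_xi: "\<forall>x t. ((\<lambda>\<tau>. \<xi> \<tau> x) has_real_derivative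
                 (- deriv w (\<xi> t x) * \<phi> (\<xi> t x) - (\<eta> t x - w (\<xi> t x)) * deriv \<phi> (\<xi> t x))) (at t)"
    and sol_eta: "\<forall>x t. ((\<lambda>\<tau>. \<eta> \<tau> x) has_real_derivative \<phi> (\<xi> t x)) (at t)"
    and init: "\<forall>x. \<xi> 0 x = x \<and> \<eta> 0 x = w x"
  shows "C2_on (\<lambda>(s, x). \<xi> (first_time \<xi> \<eta> w \<phi> s x) x) ({0..1} \<times> UNIV)
       \<and> (\<forall>s\<in>{0..1}. \<forall>x. \<eta> (first_time \<xi> \<eta> w \<phi> s x) x
              = w (\<xi> (first_time \<xi> \<eta> w \<phi> s x) x) + s * \<phi> (\<xi> (first_time \<xi> \<eta> w \<phi> s x) x))
       \<and> C2_on (\<lambda>(s, x). \<eta> (first_time \<xi> \<eta> w \<phi> s x) x) ({0..1} \<times> UNIV)"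
proof -
  interpret d: dyn w a b p \<phi> \<xi> \<eta>
    by unfold_locales (use w_C3 ab phi_def phi_bd sol_xi sol_eta init in auto)
  show ?thesis by (rule d.main)
qed

end
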